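(* Let $k\ge 3$ be an odd integer and let $\bm\delta=(1,\dots,1)$ (of length $k$). Then \[C^3_k(n)=\Omega\left(\max\left\{\frac{u_3(n)^k}{n^{k-1}},\; us_3(n)\,n^{(k-1)/2}\right\}\right).\]
   Context: For $\bm\delta=(\delta_1,\dots,\delta_k)$, a $(k+1)$-tuple $(p_1,\dots,p_{k+1})$ of pairwise distinct points of $\mathbb{R}^3$ is a $k$-chain if $\|p_j-p_{j+1}\|=\delta_j$ for all $1\le j\le k$; $C^3_k(n)$ is the maximum number of $k$-chains spanned by a set of $n$ points in $\mathbb{R}^3$. $u_3(n)$ is the maximum number of pairs of points at distance exactly $1$ in a set of $n$ points in $\mathbb{R}^3$. $us_3(n)$ is the maximum, over sets $X$ of $n$ points in $\mathbb{R}^3$ and sets $Y$ of $n$ points lying on a sphere in $\mathbb{R}^3$, of the number of pairs $(x,y)\in X\times Y$ with $\|x-y\|=1$. *)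

theory Defs
  imports "HOL-Analysis.Analysis" "HOL-Library.Landau_Symbols"
begin

type_synonym pt3 = "real ^ 3"

definition unit_chains :: "nat \<Rightarrow> pt3 set \<Rightarrow> nat" where
  "unit_chains k P = card {ps. length ps = k + 1 \<and> set ps \<subseteq> P \<and> distinct ps \<and>
       (\<forall>j<k. dist (ps ! j) (ps ! (j + 1)) = 1)}"

definition C3 :: "nat \<Rightarrow> nat \<Rightarrow> nat" where
  "C3 k n = Sup {unit_chains k P | P. finite P \<and> card P = n}"

definition unit_pairs :: "pt3 set \<Rightarrow> nat" where
  "unit_pairs P = card {{p, q} | p q. p \<in> P \<and> q \<in> P \<and> dist p q = 1}"

definition u3 :: "nat \<Rightarrow> nat" where
  "u3 n = Sup {unit_pairs P | P. finite P \<and> card P = n}"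

definition bip_unit_pairs :: "pt3 set \<Rightarrow> pt3 set \<Rightarrow> nat" where
  "bip_unit_pairs X Y = card {(x, y). x \<in> X \<and> y \<in> Y \<and> dist x y = 1}"

definition us3 :: "nat \<Rightarrow> nat" where
  "us3 n = Sup {bip_unit_pairs X Y | X Y. finite X \<and> card X = n \<and> finite Y \<and> card Y = n \<and>
      (\<exists>c r. r > 0 \<and> Y \<subseteq> sphere c r)}"

end

theory Submission
  imports Defs "HOL-Library.Quadratic_Discriminant" "HOL-Computational_Algebra.Polynomial"
begin

fun uc :: "pt3 list \<Rightarrow> bool" where
  "uc (a # b # r) = (dist a b = 1 \<and> uc (b # r))"
| "uc _ = True"

lemma uc_iff: "uc ps \<longleftrightarrow> (\<forall>j. j + 1 < length ps \<longrightarrow> dist (ps ! j) (ps ! (j + 1)) = 1)"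
proof (induction ps rule: uc.induct)
  case (1 a b r)
  show ?case
  proof
    assume "uc (a # b # r)"
    then show "\<forall>j. j + 1 < length (a # b # r) \<longrightarrow> dist ((a # b # r) ! j) ((a # b # r) ! (j + 1)) = 1"
      using 1 by (auto simp: nth_Cons split: nat.splits)
  next
    assume h: "\<forall>j. j + 1 < length (a # b # r) \<longrightarrow> dist ((a # b # r) ! j) ((a # b # r) ! (j + 1)) = 1"
    have "dist a b = 1" using h[rule_format, of 0] by simp
    moreover have "uc (b # r)"
      unfolding 1
    proof (intro allI impI)
      fix j assume "j + 1 < length (b # r)"
      then show "dist ((b # r) ! j) ((b # r) ! (j + 1)) = 1" using h[rule_format, of "Suc j"] by simp
    qed
    ultimately show "uc (a # b # r)" by simp
  qed
qed auto

lemma uc_Cons2: "uc (a # b # r) \<longleftrightarrow> dist a b = 1 \<and> uc (b # r)" by simp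

lemma uc_append: "uc (xs @ ys) \<longleftrightarrow> uc xs \<and> uc ys \<and> (xs \<noteq> [] \<longrightarrow> ys \<noteq> [] \<longrightarrow> dist (last xs) (hd ys) = 1)"
proof (induction xs)
  case Nil
  then show ?case by simp
next
  case (Cons a xs)
  show ?case
  proof (cases xs)
    case Nil
    then show ?thesis by (cases ys) auto
  next
    case (Cons b r)
    then show ?thesis using Cons.IH by auto
  qed
qed

definition chainset :: "nat \<Rightarrow> pt3 set \<Rightarrow> pt3 list set" where
  "chainset k P = {ps. length ps = k + 1 \<and> set ps \<subseteq> P \<and> distinct ps \<and> uc ps}"

lemma unit_chains_eq: "unit_chains k P = card (chainset k P)"
proof -
  have *: "(\<forall>j<k. dist (ps ! j) (ps ! (j + 1)) = 1) \<longleftrightarrow> uc ps" if "length ps = k + 1" for ps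
    unfolding uc_iff using that by simp
  have "{ps. length ps = k + 1 \<and> set ps \<subseteq> P \<and> distinct ps \<and>
       (\<forall>j<k. dist (ps ! j) (ps ! (j + 1)) = 1)} = chainset k P"
    unfolding chainset_def using * by blast
  then show ?thesis unfolding unit_chains_def by simp
qed

lemma chainset_sub: "chainset k P \<subseteq> {ps. set ps \<subseteq> P \<and> length ps = k + 1}"
  unfolding chainset_def by auto

lemma finite_chainset: "finite P \<Longrightarrow> finite (chainset k P)"
  by (rule finite_subset[OF chainset_sub finite_lists_length_eq])

lemma unit_chains_le: "finite P \<Longrightarrow> unit_chains k P \<le> card P ^ (k + 1)"
proof -
  assume f: "finite P"
  have "card (chainset k P) \<le> card {ps. set ps \<subseteq> P \<and> length ps = k + 1}"
    by (rule card_mono[OF finite_lists_length_eq[OF f] chainset_sub])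
  then show ?thesis unfolding unit_chains_eq using card_lists_length_eq[OF f] by simp
qed

lemma chainset_mono: "P \<subseteq> Q \<Longrightarrow> chainset k P \<subseteq> chainset k Q"
  unfolding chainset_def by (intro Collect_mono) blast

lemma unit_chains_mono: "finite Q \<Longrightarrow> P \<subseteq> Q \<Longrightarrow> unit_chains k P \<le> unit_chains k Q"
  unfolding unit_chains_eq by (rule card_mono[OF finite_chainset chainset_mono])

lemma infinite_pt3: "infinite (UNIV :: pt3 set)"
  by (intro infinite_UNIV_vec) (simp add: infinite_UNIV_char_0)

lemma pad_set:
  assumes "finite (P::pt3 set)" "card P \<le> n"
  shows "\<exists>Q. finite Q \<and> card Q = n \<and> P \<subseteq> Q"
proof -
  have "infinite (UNIV - P)" using infinite_pt3 assms(1) by (simp add: Diff_infinite_finite)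
  then obtain R where R: "finite R" "card R = n - card P" "R \<subseteq> UNIV - P"
    using infinite_arbitrarily_large by blast
  have "card (P \<union> R) = n" using R assms by (subst card_Un_disjoint) auto
  then show ?thesis using R assms by (intro exI[of _ "P \<union> R"]) auto
qed

lemma C3_ge:
  assumes "finite P" "card P \<le> n"
  shows "unit_chains k P \<le> C3 k n"
proof -
  obtain Q where Q: "finite Q" "card Q = n" "P \<subseteq> Q" using pad_set assms by blast
  have bdd: "bdd_above {unit_chains k P | P. finite P \<and> card P = n}"
    unfolding bdd_above_def using unit_chains_le by (intro exI[of _ "n ^ (k+1)"]) auto
  have "unit_chains k P \<le> unit_chains k Q" using unit_chains_mono Q by blast
  also have "\<dots> \<le> C3 k n" unfolding C3_def
    by (rule cSup_upper[OF _ bdd]) (use Q in blast)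
  finally show ?thesis .
qed

lemma unit_pairs_le: "finite P \<Longrightarrow> unit_pairs P \<le> card P ^ 2"
proof -
  assume f: "finite P"
  have "{{p, q} | p q. p \<in> P \<and> q \<in> P \<and> dist p q = 1} \<subseteq> (\<lambda>(p,q). {p,q}) ` (P \<times> P)"
  proof
    fix e assume "e \<in> {{p, q} | p q. p \<in> P \<and> q \<in> P \<and> dist p q = 1}"
    then obtain p q where "e = {p,q}" "p \<in> P" "q \<in> P" by blast
    then show "e \<in> (\<lambda>(p,q). {p,q}) ` (P \<times> P)" by (intro image_eqI[of _ _ "(p,q)"]) auto
  qed
  hence "unit_pairs P \<le> card ((\<lambda>(p,q). {p,q}) ` (P \<times> P))" unfolding unit_pairs_def
    using f by (intro card_mono) auto
  also have "\<dots> \<le> card (P \<times> P)" by (rule card_image_le) (use f in auto)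
  finally show ?thesis by (simp add: card_cartesian_product power2_eq_square)
qed

lemma Sup_nat_attained:
  fixes S :: "nat set"
  assumes "S \<noteq> {}" "\<And>x. x \<in> S \<Longrightarrow> x \<le> b"
  shows "Sup S \<in> S"
proof -
  have "finite S" using assms(2) finite_nat_set_iff_bounded_le by blast
  then show ?thesis using assms(1) by (simp add: Sup_nat_def)
qed

lemma u3_attained: "\<exists>P. finite P \<and> card P = n \<and> unit_pairs P = u3 n"
proof -
  obtain P :: "pt3 set" where "finite P" "card P = n" using pad_set[of "{}" n] by auto
  hence "{unit_pairs P | P. finite P \<and> card P = n} \<noteq> {}" by blast
  hence "u3 n \<in> {unit_pairs P | P. finite P \<and> card P = n}" unfolding u3_def
    by (rule Sup_nat_attained[where b = "n^2"]) (auto intro: unit_pairs_le)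
  then show ?thesis by auto
qed

lemma bip_le: "finite X \<Longrightarrow> finite Y \<Longrightarrow> bip_unit_pairs X Y \<le> card X * card Y"
proof -
  assume f: "finite X" "finite Y"
  have "bip_unit_pairs X Y \<le> card (X \<times> Y)" unfolding bip_unit_pairs_def
    using f by (intro card_mono) auto
  then show ?thesis by (simp add: card_cartesian_product)
qed

lemma us3_attained: "us3 n = 0 \<or> (\<exists>X Y c r. finite X \<and> card X = n \<and> finite Y \<and> card Y = n \<and>
      r > 0 \<and> Y \<subseteq> sphere c r \<and> bip_unit_pairs X Y = us3 n)"
proof -
  define S where "S = {bip_unit_pairs X Y | X Y. finite X \<and> card X = n \<and> finite Y \<and> card Y = n \<and>
      (\<exists>c r. r > 0 \<and> Y \<subseteq> sphere c r)}"
  have us: "us3 n = Sup S" unfolding us3_def S_def by (rule refl)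
  show ?thesis
  proof (cases "S = {}")
    case True
    then show ?thesis using us by (simp add: Sup_nat_def)
  next
    case False
    have "Sup S \<in> S"
    proof (rule Sup_nat_attained[OF False])
      fix x assume "x \<in> S"
      then obtain X Y where "x = bip_unit_pairs X Y" "finite X" "card X = n" "finite Y" "card Y = n"
        unfolding S_def by blast
      then show "x \<le> n * n" using bip_le[of X Y] by simp
    qed
    then obtain X Y c r where "Sup S = bip_unit_pairs X Y" "finite X" "card X = n" "finite Y" "card Y = n"
      "r > 0" "Y \<subseteq> sphere c r"
      unfolding S_def by blast
    then show ?thesis using us by metis
  qed
qed

definition nbr :: "pt3 set \<Rightarrow> pt3 \<Rightarrow> pt3 set" where
  "nbr Q v = {w \<in> Q. dist v w = 1}"

definition deg :: "pt3 set \<Rightarrow> pt3 \<Rightarrow> nat" where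
  "deg Q v = card (nbr Q v)"

definition opairs :: "pt3 set \<Rightarrow> (pt3 \<times> pt3) set" where
  "opairs Q = {(p, q). p \<in> Q \<and> q \<in> Q \<and> dist p q = 1}"

definition E :: "pt3 set \<Rightarrow> nat" where
  "E Q = card (opairs Q)"

lemma v_notin_nbr: "v \<notin> nbr Q v" unfolding nbr_def by simp

lemma finite_nbr: "finite Q \<Longrightarrow> finite (nbr Q v)" unfolding nbr_def by simp

lemma opairs_Sigma: "opairs Q = Sigma Q (nbr Q)"
  unfolding opairs_def nbr_def by auto

lemma E_sum: "finite Q \<Longrightarrow> E Q = (\<Sum>v\<in>Q. deg Q v)"
  unfolding E_def opairs_Sigma deg_def by (rule card_SigmaI) (auto simp: finite_nbr)

lemma finite_opairs: "finite Q \<Longrightarrow> finite (opairs Q)"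
  unfolding opairs_Sigma by (simp add: finite_nbr)

lemma E_remove:
  assumes f: "finite Q" and v: "v \<in> Q"
  shows "E Q = E (Q - {v}) + 2 * deg Q v"
proof -
  have eq: "opairs Q = opairs (Q - {v}) \<union> ((\<lambda>w. (v, w)) ` nbr Q v \<union> (\<lambda>w. (w, v)) ` nbr Q v)"
    unfolding opairs_def nbr_def using v by (auto simp: dist_commute)
  have d1: "(\<lambda>w. (v, w)) ` nbr Q v \<inter> (\<lambda>w. (w, v)) ` nbr Q v = {}"
    using v_notin_nbr by auto
  have d2: "opairs (Q - {v}) \<inter> ((\<lambda>w. (v, w)) ` nbr Q v \<union> (\<lambda>w. (w, v)) ` nbr Q v) = {}"
    unfolding opairs_def by auto
  have c1: "card ((\<lambda>w. (v, w)) ` nbr Q v) = deg Q v" unfolding deg_def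
    by (rule card_image) (auto simp: inj_on_def)
  have c2: "card ((\<lambda>w. (w, v)) ` nbr Q v) = deg Q v" unfolding deg_def
    by (rule card_image) (auto simp: inj_on_def)
  have "E Q = card (opairs (Q - {v})) + card ((\<lambda>w. (v, w)) ` nbr Q v \<union> (\<lambda>w. (w, v)) ` nbr Q v)"
    unfolding E_def eq
    by (rule card_Un_disjoint[OF _ _ d2]) (use f finite_opairs finite_nbr in auto)
  also have "card ((\<lambda>w. (v, w)) ` nbr Q v \<union> (\<lambda>w. (w, v)) ` nbr Q v) = deg Q v + deg Q v"
    by (subst card_Un_disjoint[OF _ _ d1]) (use f finite_nbr c1 c2 in auto)
  finally show ?thesis unfolding E_def by simp
qed

lemma core_exists:
  fixes d :: real
  assumes d0: "d \<ge> 0"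
  shows "finite Q \<Longrightarrow> \<exists>R \<subseteq> Q. real (E R) \<ge> real (E Q) - 2 * d * card Q \<and> (\<forall>v\<in>R. real (deg R v) \<ge> d)"
proof (induction "card Q" arbitrary: Q rule: less_induct)
  case less
  show ?case
  proof (cases "\<forall>v\<in>Q. real (deg Q v) \<ge> d")
    case True
    have "0 \<le> 2 * d * card Q" using d0 by simp
    then show ?thesis using True by (intro exI[of _ Q]) auto
  next
    case False
    then obtain v where v: "v \<in> Q" "real (deg Q v) < d" by force
    have lt: "card (Q - {v}) < card Q" by (rule card_Diff1_less[OF less.prems v(1)])
    obtain R where R: "R \<subseteq> Q - {v}" "real (E R) \<ge> real (E (Q - {v})) - 2 * d * card (Q - {v})"
      "\<forall>w\<in>R. real (deg R w) \<ge> d"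
      using less.hyps[OF lt] less.prems by auto
    have e: "real (E Q) = real (E (Q - {v})) + 2 * real (deg Q v)"
      using E_remove[OF less.prems v(1)] by simp
    have "0 < card Q" using less.prems v(1) card_gt_0_iff by blast
    then have c: "real (card (Q - {v})) = real (card Q) - 1"
      by (simp add: card_Diff_singleton[OF v(1)] of_nat_diff)
    have "real (E R) \<ge> real (E Q) - 2 * d * card Q"
      using R(2) e c v(2) by (simp add: algebra_simps)
    then show ?thesis using R by (intro exI[of _ R]) auto
  qed
qed

lemma chainset1: "chainset 1 Q = (\<lambda>(p, q). [p, q]) ` opairs Q"
proof (intro set_eqI iffI)
  fix ps assume "ps \<in> chainset 1 Q"
  then have h: "length ps = 2" "set ps \<subseteq> Q" "uc ps" unfolding chainset_def by auto
  then obtain p q where "ps = [p, q]"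
    by (metis (no_types, lifting) One_nat_def Suc_1 length_0_conv length_Suc_conv)
  then show "ps \<in> (\<lambda>(p, q). [p, q]) ` opairs Q" using h unfolding opairs_def
    by (intro image_eqI[of _ _ "(p,q)"]) auto
next
  fix ps assume "ps \<in> (\<lambda>(p, q). [p, q]) ` opairs Q"
  then obtain p q where "ps = [p, q]" "p \<in> Q" "q \<in> Q" "dist p q = 1" unfolding opairs_def by auto
  then show "ps \<in> chainset 1 Q" unfolding chainset_def by auto
qed

lemma card_chainset1: "card (chainset 1 Q) = E Q"
  unfolding chainset1 E_def by (rule card_image) (auto simp: inj_on_def)

lemma chainset_extend:
  fixes d :: real
  assumes f: "finite Q" and md: "\<forall>v\<in>Q. real (deg Q v) \<ge> d"
  shows "real (card (chainset (Suc j) Q)) \<ge> (d - j) * card (chainset j Q)"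
proof -
  define ext where "ext ps = (\<lambda>w. ps @ [w]) ` (nbr Q (last ps) - set ps)" for ps
  have sub: "(\<Union>ps\<in>chainset j Q. ext ps) \<subseteq> chainset (Suc j) Q"
  proof (intro subsetI, elim UN_E)
    fix xs ps assume ps: "ps \<in> chainset j Q" and xs: "xs \<in> ext ps"
    then obtain w where w: "w \<in> nbr Q (last ps)" "w \<notin> set ps" "xs = ps @ [w]" unfolding ext_def by auto
    have ps': "length ps = j + 1" "set ps \<subseteq> Q" "distinct ps" "uc ps" using ps unfolding chainset_def by auto
    have "ps \<noteq> []" using ps' by auto
    have "uc (ps @ [w])" unfolding uc_append using ps' w(1) unfolding nbr_def by auto
    then show "xs \<in> chainset (Suc j) Q" using ps' w unfolding chainset_def nbr_def by auto
  qed
  have disj: "\<forall>ps1\<in>chainset j Q. \<forall>ps2\<in>chainset j Q. ps1 \<noteq> ps2 \<longrightarrow> ext ps1 \<inter> ext ps2 = {}"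
    unfolding ext_def by auto
  have fin: "finite (chainset j Q)" using f by (rule finite_chainset)
  have finext: "\<forall>ps\<in>chainset j Q. finite (ext ps)" unfolding ext_def using f finite_nbr by auto
  have cext: "real (card (ext ps)) \<ge> d - j" if ps: "ps \<in> chainset j Q" for ps
  proof -
    have ps': "length ps = j + 1" "set ps \<subseteq> Q" "distinct ps" "uc ps" using ps unfolding chainset_def by auto
    have "ps \<noteq> []" using ps' by auto
    then have lastin: "last ps \<in> set ps" by simp
    have "card (ext ps) = card (nbr Q (last ps) - set ps)" unfolding ext_def
      by (rule card_image) (auto simp: inj_on_def)
    also have "nbr Q (last ps) - set ps = nbr Q (last ps) - (set ps - {last ps})"
      using v_notin_nbr by auto
    also have "card (nbr Q (last ps) - (set ps - {last ps})) \<ge> card (nbr Q (last ps)) - card (set ps - {last ps})"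
      by (rule diff_card_le_card_Diff) simp
    finally have "card (ext ps) \<ge> deg Q (last ps) - j"
      using lastin ps' by (simp add: deg_def distinct_card card_Diff_singleton)
    then have "real (card (ext ps)) \<ge> real (deg Q (last ps)) - j" by linarith
    moreover have "real (deg Q (last ps)) \<ge> d" using md lastin ps' by auto
    ultimately show ?thesis by linarith
  qed
  have "(d - j) * card (chainset j Q) = (\<Sum>ps\<in>chainset j Q. (d - j))" by simp
  also have "\<dots> \<le> (\<Sum>ps\<in>chainset j Q. real (card (ext ps)))" by (rule sum_mono) (use cext in auto)
  also have "\<dots> = real (\<Sum>ps\<in>chainset j Q. card (ext ps))" by simp
  also have "(\<Sum>ps\<in>chainset j Q. card (ext ps)) = card (\<Union>ps\<in>chainset j Q. ext ps)"
    by (rule card_UN_disjoint[symmetric]) (use fin finext disj in auto)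
  also have "\<dots> \<le> card (chainset (Suc j) Q)" by (rule card_mono[OF finite_chainset[OF f] sub])
  finally show ?thesis by simp
qed

lemma chainset_lower:
  fixes d :: real and k j :: nat
  assumes f: "finite Q" and md: "\<forall>v\<in>Q. real (deg Q v) \<ge> d" and dk: "d \<ge> k"
  shows "1 \<le> j \<Longrightarrow> j \<le> k \<Longrightarrow> real (card (chainset j Q)) \<ge> real (E Q) * (d - k) ^ (j - 1)"
proof (induction j rule: dec_induct)
  case base
  then show ?case using card_chainset1 by simp
next
  case (step j)
  have jk: "j < k" using step.prems by simp
  have IH: "real (card (chainset j Q)) \<ge> real (E Q) * (d - k) ^ (j - 1)" by (rule step.IH) (use jk in linarith)
  obtain i where ji: "j = Suc i" using step.hyps by (cases j) auto
  have "real (E Q) * (d - k) ^ (Suc j - 1) = (real (E Q) * (d - k) ^ (j - 1)) * (d - k)"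
    unfolding ji by simp
  also have "\<dots> \<le> real (card (chainset j Q)) * (d - k)"
    by (rule mult_right_mono[OF IH]) (use dk in auto)
  also have "\<dots> \<le> real (card (chainset j Q)) * (d - j)"
    by (rule mult_left_mono) (use jk dk in auto)
  also have "\<dots> \<le> real (card (chainset (Suc j) Q))"
    using chainset_extend[OF f md, of j] by (simp add: mult.commute)
  finally show ?case .
qed

lemma E_ge_unit_pairs: "finite P \<Longrightarrow> unit_pairs P \<le> E P"
proof -
  assume f: "finite P"
  have "{{p, q} | p q. p \<in> P \<and> q \<in> P \<and> dist p q = 1} \<subseteq> (\<lambda>(p,q). {p,q}) ` opairs P"
  proof
    fix e assume "e \<in> {{p, q} | p q. p \<in> P \<and> q \<in> P \<and> dist p q = 1}"
    then obtain p q where "e = {p,q}" "p \<in> P" "q \<in> P" "dist p q = 1" by blast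
    then show "e \<in> (\<lambda>(p,q). {p,q}) ` opairs P" unfolding opairs_def by (intro image_eqI[of _ _ "(p,q)"]) auto
  qed
  hence "unit_pairs P \<le> card ((\<lambda>(p,q). {p,q}) ` opairs P)" unfolding unit_pairs_def
    using f finite_opairs by (intro card_mono) auto
  also have "\<dots> \<le> card (opairs P)" by (rule card_image_le) (use f finite_opairs in auto)
  finally show ?thesis unfolding E_def .
qed

definition e1 :: pt3 where "e1 = axis 1 1"

lemma norm_e1: "norm e1 = 1" unfolding e1_def by (rule norm_axis_1)

lemma dist_line: "dist (a *\<^sub>R e1) (b *\<^sub>R e1) = \<bar>a - b\<bar>"
proof -
  have "dist (a *\<^sub>R e1) (b *\<^sub>R e1) = norm ((a - b) *\<^sub>R e1)" by (simp add: dist_norm algebra_simps)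
  also have "\<dots> = \<bar>a - b\<bar>" using norm_e1 by simp
  finally show ?thesis .
qed

lemma C3_linear:
  assumes "k < n"
  shows "n - k \<le> C3 k n"
proof -
  define pt where "pt i = real i *\<^sub>R e1" for i :: nat
  have injpt: "inj pt"
  proof (rule injI)
    fix a b assume "pt a = pt b"
    then have "dist (pt a) (pt b) = 0" by simp
    then show "a = b" unfolding pt_def dist_line by simp
  qed
  define P where "P = pt ` {..<n}"
  define ch where "ch j = map (\<lambda>i. pt (j + i)) [0..<k+1]" for j
  have inch: "ch j \<in> chainset k P" if j: "j < n - k" for j
  proof -
    have "length (ch j) = k + 1" unfolding ch_def by simp
    moreover have "set (ch j) \<subseteq> P" unfolding ch_def P_def using j by auto
    moreover have "distinct (ch j)" unfolding ch_def distinct_map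
    proof
      show "inj_on (\<lambda>i. pt (j + i)) (set [0..<k+1])"
        by (rule inj_onI) (drule injD[OF injpt], simp)
    qed simp
    moreover have "uc (ch j)" unfolding uc_iff
    proof (intro allI impI)
      fix t assume "t + 1 < length (ch j)"
      then have "t < k" unfolding ch_def by simp
      then have "ch j ! t = pt (j + t)" "ch j ! (t + 1) = pt (j + t + 1)" unfolding ch_def
        by (simp_all add: nth_map_upt del: upt_Suc)
      then show "dist (ch j ! t) (ch j ! (t + 1)) = 1" unfolding pt_def dist_line by (simp add: norm_e1)
    qed
    ultimately show ?thesis unfolding chainset_def by blast
  qed
  have injch: "inj_on ch {..<n - k}"
  proof (rule inj_onI)
    fix a b assume "ch a = ch b"
    then have "hd (ch a) = hd (ch b)" by simp
    then have "pt a = pt b" unfolding ch_def by (simp add: upt_conv_Cons del: upt_Suc)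
    then show "a = b" using injpt by (simp add: inj_eq)
  qed
  have "n - k = card (ch ` {..<n - k})" using card_image[OF injch] by simp
  also have "\<dots> \<le> card (chainset k P)"
    by (rule card_mono[OF finite_chainset]) (use inch P_def in auto)
  also have "\<dots> = unit_chains k P" by (simp add: unit_chains_eq)
  also have "\<dots> \<le> C3 k n"
    by (rule C3_ge) (use P_def card_image_le[of "{..<n}" pt] in auto)
  finally show ?thesis .
qed

lemma partA:
  assumes k1: "k \<ge> 1"
  shows "\<exists>c>0. \<exists>N. \<forall>n\<ge>N. real (C3 k n) \<ge> c * (real (u3 n) ^ k / real n ^ (k - 1))"
proof -
  define c where "c = min (1 / (2 * 8 ^ (k - 1))) (1 / (2 * (8 * real k) ^ k))"
  have c0: "c > 0" unfolding c_def using k1 by simp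
  obtain k' where kk: "k = Suc k'" using k1 by (cases k) auto
  have main: "real (C3 k n) \<ge> c * (real (u3 n) ^ k / real n ^ (k - 1))" if n: "n \<ge> 2 * k + 1" for n
  proof -
    obtain P where P: "finite P" "card P = n" "unit_pairs P = u3 n" using u3_attained by blast
    define M where "M = real (u3 n)"
    define S where "S = real (E P)"
    have MS: "M \<le> S" unfolding M_def S_def using E_ge_unit_pairs[OF P(1)] P(3) by simp
    have M0: "M \<ge> 0" unfolding M_def by simp
    have npos: "real n > 0" using n by simp
    have Mk: "M ^ k \<le> S ^ k" using MS M0 by (rule power_mono)
    show ?thesis
    proof (cases "S \<ge> 8 * real k * real n")
      case True
      define d where "d = S / (4 * n)"
      have d2k: "d \<ge> 2 * k" unfolding d_def using True npos by (simp add: field_simps)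
      have d0: "d \<ge> 0" using d2k by simp
      obtain R where R: "R \<subseteq> P" "real (E R) \<ge> real (E P) - 2 * d * card P" "\<forall>v\<in>R. real (deg R v) \<ge> d"
        using core_exists[OF d0 P(1)] by blast
      have fR: "finite R" using R(1) P(1) finite_subset by blast
      have ER: "real (E R) \<ge> S / 2" using R(2) P(2) npos unfolding d_def S_def by (simp add: field_simps)
      have dk: "d \<ge> real k" using d2k by simp
      have "real (card (chainset k R)) \<ge> real (E R) * (d - k) ^ (k - 1)"
        using chainset_lower[OF fR R(3) dk, of k] k1 by simp
      moreover have "real (E R) * (d - k) ^ (k - 1) \<ge> (S / 2) * (d / 2) ^ (k - 1)"
      proof (rule mult_mono[OF ER power_mono])
        show "d / 2 \<le> d - real k" using d2k by simp
        show "0 \<le> d / 2" using d0 by simp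
        show "0 \<le> real (E R)" by simp
        show "0 \<le> (d / 2) ^ (k - 1)" using d0 by simp
      qed
      moreover have "(S / 2) * (d / 2) ^ (k - 1) = S ^ k / (2 * 8 ^ (k - 1) * real n ^ (k - 1))"
      proof -
        have "(d / 2) ^ (k - 1) = S ^ (k - 1) / (8 ^ (k - 1) * real n ^ (k - 1))"
          unfolding d_def by (simp add: power_divide power_mult_distrib)
        moreover have "S * S ^ (k - 1) = S ^ k" unfolding kk by simp
        ultimately show ?thesis by (simp add: field_simps)
      qed
      moreover have "unit_chains k R \<le> C3 k n" using C3_ge[OF fR] card_mono[OF P(1) R(1)] P(2) by simp
      ultimately have "real (C3 k n) \<ge> S ^ k / (2 * 8 ^ (k - 1) * real n ^ (k - 1))"
        unfolding unit_chains_eq by linarith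
      moreover have "S ^ k / (2 * 8 ^ (k - 1) * real n ^ (k - 1)) \<ge> M ^ k / (2 * 8 ^ (k - 1) * real n ^ (k - 1))"
        using Mk npos by (simp add: divide_right_mono)
      moreover have "M ^ k / (2 * 8 ^ (k - 1) * real n ^ (k - 1)) = (1 / (2 * 8 ^ (k - 1))) * (M ^ k / real n ^ (k - 1))"
        by simp
      moreover have "c * (M ^ k / real n ^ (k - 1)) \<le> (1 / (2 * 8 ^ (k - 1))) * (M ^ k / real n ^ (k - 1))"
        by (rule mult_right_mono) (auto simp: c_def M0)
      ultimately show ?thesis unfolding M_def by linarith
    next
      case False
      have "M ^ k \<le> (8 * real k * real n) ^ k" using MS False M0 by (intro power_mono) auto
      also have "\<dots> = (8 * real k) ^ k * real n ^ k"
        by (simp add: power_mult_distrib)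
      also have "(8 * real k) ^ k * real n ^ k = (8 * real k) ^ k * real n * real n ^ (k - 1)" unfolding kk by simp
      finally have "M ^ k / real n ^ (k - 1) \<le> (8 * real k) ^ k * real n"
        using npos by (simp add: divide_le_eq)
      moreover have Kpos: "(8 * real k) ^ k > 0" using k1 by simp
      moreover have gen: "\<And>X K N::real. X \<le> K * N \<Longrightarrow> 0 < K \<Longrightarrow> X / K \<le> N"
        by (simp add: pos_divide_le_eq mult.commute)
      ultimately have A: "M ^ k / real n ^ (k - 1) / (8 * real k) ^ k \<le> real n"
        by blast
      have eq: "(1 / (2 * (8 * real k) ^ k)) * (M ^ k / real n ^ (k - 1)) = (M ^ k / real n ^ (k - 1) / (8 * real k) ^ k) / 2"
        by simp
      have "(1 / (2 * (8 * real k) ^ k)) * (M ^ k / real n ^ (k - 1)) \<le> real n / 2"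
        unfolding eq by (rule divide_right_mono[OF A]) simp
      moreover have "c * (M ^ k / real n ^ (k - 1)) \<le> (1 / (2 * (8 * real k) ^ k)) * (M ^ k / real n ^ (k - 1))"
        by (rule mult_right_mono) (auto simp: c_def M0)
      moreover have "real n / 2 \<le> real (C3 k n)"
      proof -
        have "n - k \<le> C3 k n" by (rule C3_linear) (use n in simp)
        then show ?thesis using n by linarith
      qed
      ultimately show ?thesis unfolding M_def by linarith
    qed
  qed
  show ?thesis using c0 main by blast
qed

fun blocks :: "(nat \<Rightarrow> pt3) \<Rightarrow> (nat \<Rightarrow> pt3 set) \<Rightarrow> nat \<Rightarrow> pt3 list set" where
  "blocks a G 0 = {[]}"
| "blocks a G (Suc j) = (\<lambda>(w, z). w @ [a j, z]) ` (blocks a G j \<times> G (Suc j))"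

locale tail =
  fixes a :: "nat \<Rightarrow> pt3" and G :: "nat \<Rightarrow> pt3 set" and m :: nat
  assumes a_inj: "inj a"
    and a_notin: "\<And>i i'. a i \<notin> G i'"
    and G_disj: "\<And>i i'. i \<noteq> i' \<Longrightarrow> G i \<inter> G i' = {}"
    and G_fin: "\<And>i. finite (G i)"
    and G_card: "\<And>i. card (G i) = m"
    and G_adj1: "\<And>i z. z \<in> G (Suc i) \<Longrightarrow> dist (a i) z = 1"
    and G_adj2: "\<And>i z. z \<in> G (Suc i) \<Longrightarrow> dist z (a (Suc i)) = 1"
begin

lemma blocks_props:
  "w \<in> blocks a G j \<Longrightarrow> length w = 2 * j \<and> set w \<subseteq> a ` {..<j} \<union> (\<Union>i\<in>{1..j}. G i) \<and> distinct w \<and> uc w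
     \<and> (j \<ge> 1 \<longrightarrow> last w \<in> G j \<and> hd w = a 0)"
proof (induction j arbitrary: w)
  case 0
  then show ?case by simp
next
  case (Suc j)
  then obtain v z where w: "w = v @ [a j, z]" and v: "v \<in> blocks a G j" and z: "z \<in> G (Suc j)" by auto
  have IH: "length v = 2 * j" "set v \<subseteq> a ` {..<j} \<union> (\<Union>i\<in>{1..j}. G i)" "distinct v" "uc v"
    "j \<ge> 1 \<longrightarrow> last v \<in> G j \<and> hd v = a 0"
    using Suc.IH[OF v] by auto
  have len: "length w = 2 * Suc j" using IH w by simp
  have set: "set w \<subseteq> a ` {..<Suc j} \<union> (\<Union>i\<in>{1..Suc j}. G i)"
  proof -
    have "a ` {..<j} \<subseteq> a ` {..<Suc j}" by auto
    moreover have "(\<Union>i\<in>{1..j}. G i) \<subseteq> (\<Union>i\<in>{1..Suc j}. G i)" by (rule UN_mono) auto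
    moreover have "a j \<in> a ` {..<Suc j}" by auto
    moreover have "z \<in> (\<Union>i\<in>{1..Suc j}. G i)" using z by force
    ultimately show ?thesis using IH(2) w by auto
  qed
  have ajv: "a j \<notin> set v"
  proof
    assume "a j \<in> set v"
    then have "a j \<in> a ` {..<j} \<or> a j \<in> (\<Union>i\<in>{1..j}. G i)" using IH(2) by blast
    then show False using a_notin a_inj by (auto simp: inj_eq)
  qed
  have zv: "z \<notin> set v"
  proof
    assume "z \<in> set v"
    then have "z \<in> a ` {..<j} \<or> z \<in> (\<Union>i\<in>{1..j}. G i)" using IH(2) by blast
    then show False
    proof
      assume "z \<in> a ` {..<j}" then show False using a_notin z by auto
    next
      assume "z \<in> (\<Union>i\<in>{1..j}. G i)"
      then obtain i where "i \<in> {1..j}" "z \<in> G i" by blast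
      then show False using G_disj[of i "Suc j"] z by auto
    qed
  qed
  have zaj: "z \<noteq> a j" using a_notin z by auto
  have dist: "distinct w" using w IH(3) ajv zv zaj by auto
  have uc: "uc w"
  proof -
    have "uc [a j, z]" using G_adj1[OF z] by simp
    moreover have "v \<noteq> [] \<longrightarrow> dist (last v) (a j) = 1"
    proof
      assume "v \<noteq> []"
      then have "j \<ge> 1" using IH(1) by (cases j) auto
      then have "last v \<in> G j" using IH(5) by auto
      then show "dist (last v) (a j) = 1" using G_adj2[where i = "j - 1"] \<open>j \<ge> 1\<close> by auto
    qed
    ultimately show ?thesis unfolding w uc_append using IH(4) by auto
  qed
  have lh: "last w \<in> G (Suc j) \<and> hd w = a 0"
  proof (cases "j = 0")
    case True
    then have "v = []" using IH(1) by simp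
    then show ?thesis using w z True by simp
  next
    case False
    then have "v \<noteq> []" using IH(1) by auto
    then show ?thesis using w z IH(5) False by simp
  qed
  show ?case using len set dist uc lh by blast
qed

lemma blocks_finite_card: "finite (blocks a G j) \<and> card (blocks a G j) = m ^ j"
proof (induction j)
  case 0
  then show ?case by simp
next
  case (Suc j)
  have inj: "inj_on (\<lambda>(w, z). w @ [a j, z]) (blocks a G j \<times> G (Suc j))"
    by (auto simp: inj_on_def)
  show ?case using Suc G_fin G_card card_image[OF inj]
    by (simp add: card_cartesian_product)
qed

lemma type1:
  assumes l1: "l \<ge> 1" and fP: "finite P"
    and XP: "X \<subseteq> P" and YP: "Y \<subseteq> P" and aP: "a ` {..<l} \<subseteq> P" and GP: "\<And>i. i \<in> {1..l} \<Longrightarrow> G i \<subseteq> P"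
    and Yadj: "\<And>y. y \<in> Y \<Longrightarrow> dist y (a 0) = 1"
    and avoid: "\<And>x. x \<in> X \<union> Y \<Longrightarrow> x \<notin> a ` {1..<l} \<and> (\<forall>i\<in>{1..l}. x \<notin> G i)"
  shows "card {(x, y). x \<in> X \<and> y \<in> Y \<and> dist x y = 1 \<and> x \<noteq> a 0} * m ^ l \<le> unit_chains (2 * l + 1) P"
proof -
  define A where "A = {(x, y). x \<in> X \<and> y \<in> Y \<and> dist x y = 1 \<and> x \<noteq> a 0}"
  define f :: "(pt3 \<times> pt3) \<times> pt3 list \<Rightarrow> pt3 list" where "f = (\<lambda>((x, y), w). x # y # w)"
  have inj: "inj_on f (A \<times> blocks a G l)" unfolding f_def by (auto simp: inj_on_def)
  have sub: "f ` (A \<times> blocks a G l) \<subseteq> chainset (2 * l + 1) P"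
  proof
    fix c assume "c \<in> f ` (A \<times> blocks a G l)"
    then obtain x y w where c: "c = x # y # w" and xy: "(x, y) \<in> A" and w: "w \<in> blocks a G l"
      unfolding f_def by auto
    have x: "x \<in> X" "y \<in> Y" "dist x y = 1" "x \<noteq> a 0" using xy unfolding A_def by auto
    have W: "length w = 2 * l" "set w \<subseteq> a ` {..<l} \<union> (\<Union>i\<in>{1..l}. G i)" "distinct w" "uc w"
      "last w \<in> G l" "hd w = a 0"
      using blocks_props[OF w] l1 by auto
    have wne: "w \<noteq> []" using W(1) l1 by auto
    have ya: "dist y (a 0) = 1" using Yadj x(2) by simp
    have notin: "z \<notin> set w" if z: "z \<in> X \<union> Y" "z \<noteq> a 0" for z
    proof
      assume "z \<in> set w"
      then have "z \<in> a ` {..<l} \<or> z \<in> (\<Union>i\<in>{1..l}. G i)" using W(2) by blast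
      then show False
      proof
        assume "z \<in> a ` {..<l}"
        then obtain i where i: "i < l" "z = a i" by auto
        show False
        proof (cases "i = 0")
          case True then show False using z i by simp
        next
          case False then have "i \<in> {1..<l}" using i by auto
          then show False using avoid[OF z(1)] i by auto
        qed
      next
        assume "z \<in> (\<Union>i\<in>{1..l}. G i)"
        then show False using avoid[OF z(1)] by auto
      qed
    qed
    have xw: "x \<notin> set w" using notin[of x] x(1,4) by blast
    have "y \<noteq> a 0" using ya by auto
    then have yw: "y \<notin> set w" using notin[of y] x(2) by blast
    have xy_ne: "x \<noteq> y" using x(3) by auto
    have "length c = 2 * l + 1 + 1" using c W by simp
    moreover have "set c \<subseteq> P"
    proof -
      have "set w \<subseteq> P" using W(2) aP GP by blast
      then show ?thesis using c x XP YP by auto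
    qed
    moreover have "distinct c" using c W(3) xw yw xy_ne by simp
    moreover have "uc c"
    proof -
      have "uc (y # w)" using uc_append[of "[y]" w] W(4) W(6) wne ya by simp
      then show ?thesis using c x(3) by (cases w) auto
    qed
    ultimately show "c \<in> chainset (2 * l + 1) P" unfolding chainset_def by blast
  qed
  have finA: "finite A"
  proof -
    have "A \<subseteq> X \<times> Y" unfolding A_def by auto
    moreover have "finite (X \<times> Y)" using XP YP fP finite_subset by blast
    ultimately show ?thesis using finite_subset by blast
  qed
  have "card A * m ^ l = card (f ` (A \<times> blocks a G l))"
    using card_image[OF inj] blocks_finite_card by (simp add: card_cartesian_product)
  also have "\<dots> \<le> card (chainset (2 * l + 1) P)" by (rule card_mono[OF finite_chainset[OF fP] sub])
  finally show ?thesis unfolding A_def unit_chains_eq .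
qed

lemma type2:
  assumes l1: "l \<ge> 1" and fP: "finite P"
    and aP: "a ` {..l} \<subseteq> P" and GP: "\<And>i. i \<le> l \<Longrightarrow> G i \<subseteq> P"
    and G0adj: "\<And>s. s \<in> G 0 \<Longrightarrow> dist s (a 0) = 1"
  shows "m ^ (l + 1) \<le> unit_chains (2 * l + 1) P"
proof -
  define f :: "pt3 \<times> pt3 list \<Rightarrow> pt3 list" where "f = (\<lambda>(s, w). s # w @ [a l])"
  have inj: "inj_on f (G 0 \<times> blocks a G l)" unfolding f_def by (auto simp: inj_on_def)
  have sub: "f ` (G 0 \<times> blocks a G l) \<subseteq> chainset (2 * l + 1) P"
  proof
    fix c assume "c \<in> f ` (G 0 \<times> blocks a G l)"
    then obtain s w where c: "c = s # w @ [a l]" and s: "s \<in> G 0" and w: "w \<in> blocks a G l"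
      unfolding f_def by auto
    have W: "length w = 2 * l" "set w \<subseteq> a ` {..<l} \<union> (\<Union>i\<in>{1..l}. G i)" "distinct w" "uc w"
      "last w \<in> G l" "hd w = a 0"
      using blocks_props[OF w] l1 by auto
    have wne: "w \<noteq> []" using W(1) l1 by auto
    have sw: "s \<notin> set w"
    proof
      assume "s \<in> set w"
      then have "s \<in> a ` {..<l} \<or> s \<in> (\<Union>i\<in>{1..l}. G i)" using W(2) by blast
      then show False
      proof
        assume "s \<in> a ` {..<l}" then show False using a_notin s by auto
      next
        assume "s \<in> (\<Union>i\<in>{1..l}. G i)"
        then obtain i where "i \<in> {1..l}" "s \<in> G i" by blast
        then show False using G_disj[of i 0] s by auto
      qed
    qed
    have alw: "a l \<notin> set w"
    proof
      assume "a l \<in> set w"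
      then have "a l \<in> a ` {..<l} \<or> a l \<in> (\<Union>i\<in>{1..l}. G i)" using W(2) by blast
      then show False using a_notin a_inj by (auto simp: inj_eq)
    qed
    have sal: "s \<noteq> a l" using a_notin s by auto
    have "length c = 2 * l + 1 + 1" using c W by simp
    moreover have "set c \<subseteq> P"
    proof -
      have "set w \<subseteq> P" using W(2) aP GP by force
      moreover have "a l \<in> P" using aP by auto
      moreover have "s \<in> P" using GP[of 0] s by auto
      ultimately show ?thesis using c by auto
    qed
    moreover have "distinct c" using c W(3) sw alw sal by simp
    moreover have "uc c"
    proof -
      have la: "dist (last w) (a l) = 1" using G_adj2[where i = "l - 1"] W(5) l1 by auto
      have "uc (w @ [a l])" using uc_append[of w "[a l]"] W(4) wne la by simp
      moreover have "dist s (hd (w @ [a l])) = 1" using G0adj[OF s] W(6) wne by simp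
      ultimately show ?thesis using c uc_append[of "[s]" "w @ [a l]"] by simp
    qed
    ultimately show "c \<in> chainset (2 * l + 1) P" unfolding chainset_def by blast
  qed
  have "m ^ (l + 1) = card (f ` (G 0 \<times> blocks a G l))"
    using card_image[OF inj] blocks_finite_card G_card[of 0] by (simp add: card_cartesian_product)
  also have "\<dots> \<le> card (chainset (2 * l + 1) P)" by (rule card_mono[OF finite_chainset[OF fP] sub])
  finally show ?thesis unfolding unit_chains_eq .
qed

end

definition e2 :: pt3 where "e2 = axis 2 1"
definition e3 :: pt3 where "e3 = axis 3 1"

lemma orth: "e1 \<bullet> e1 = 1" "e2 \<bullet> e2 = 1" "e3 \<bullet> e3 = 1"
  "e1 \<bullet> e2 = 0" "e1 \<bullet> e3 = 0" "e2 \<bullet> e3 = 0"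
  "e2 \<bullet> e1 = 0" "e3 \<bullet> e1 = 0" "e3 \<bullet> e2 = 0"
  unfolding e1_def e2_def e3_def by (simp_all add: inner_axis_axis)

lemma dist1_inner: "dist p q = 1 \<longleftrightarrow> (p - q) \<bullet> (p - q) = 1"
  unfolding dist_norm by (simp add: norm_eq_1)

definition hub :: "real \<Rightarrow> nat \<Rightarrow> pt3" where
  "hub h i = (real i * h) *\<^sub>R e1"

definition circ :: "real \<Rightarrow> nat \<Rightarrow> pt3 set" where
  "circ h i = {p. p \<bullet> e1 = (real i - 1/2) * h \<and> dist p (hub h i) = 1}"

lemma d_hub: "dist p (hub h i) = 1 \<longleftrightarrow> p \<bullet> p - 2 * (real i * h) * (p \<bullet> e1) + (real i * h)^2 = 1"
proof -
  have "(p - hub h i) \<bullet> (p - hub h i) = p \<bullet> p - 2 * (real i * h) * (p \<bullet> e1) + (real i * h)^2"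
    unfolding hub_def by (simp add: inner_diff_left inner_diff_right orth inner_commute power2_eq_square)
  then show ?thesis by (simp add: dist1_inner)
qed

lemma circ_prev: "p \<in> circ h (Suc i) \<Longrightarrow> dist (hub h i) p = 1"
proof -
  assume p: "p \<in> circ h (Suc i)"
  then have a: "p \<bullet> e1 = (real i + 1/2) * h" and b: "p \<bullet> p - 2 * ((real i + 1) * h) * (p \<bullet> e1) + ((real i + 1) * h)^2 = 1"
    unfolding circ_def d_hub by (auto simp: algebra_simps)
  have "p \<bullet> p - 2 * (real i * h) * (p \<bullet> e1) + (real i * h)^2 = 1"
    using b unfolding a by (simp add: algebra_simps power2_eq_square)
  then show ?thesis using d_hub by (simp add: dist_commute)
qed

lemma circ_infinite:
  assumes h: "0 < h" "h < 1"
  shows "infinite (circ h i)"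
proof -
  define \<rho> where "\<rho> = sqrt (1 - h^2/4)"
  have hsq: "h^2 < 1" using mult_strict_mono[of h 1 h 1] h by (simp add: power2_eq_square)
  have \<rho>sq: "\<rho>^2 = 1 - h^2/4" unfolding \<rho>_def using hsq by simp
  have \<rho>pos: "\<rho> > 0" unfolding \<rho>_def using hsq by simp
  define q where "q t = ((real i - 1/2) * h) *\<^sub>R e1 + \<rho> *\<^sub>R (cos t *\<^sub>R e2 + sin t *\<^sub>R e3)" for t
  have q1: "q t \<bullet> e1 = (real i - 1/2) * h" for t
    unfolding q_def by (simp add: inner_add_left orth)
  have q2: "q t \<bullet> e2 = \<rho> * cos t" for t
    unfolding q_def by (simp add: inner_add_left orth)
  have qq: "q t \<bullet> q t = ((real i - 1/2) * h)^2 + \<rho>^2" for t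
  proof -
    define w where "w = cos t *\<^sub>R e2 + sin t *\<^sub>R e3"
    have ww: "w \<bullet> w = 1" unfolding w_def
      by (simp add: inner_add_left inner_add_right orth sin_cos_squared_add3)
    have we: "w \<bullet> e1 = 0" "e1 \<bullet> w = 0" unfolding w_def by (simp_all add: inner_add_left inner_add_right orth)
    have "q t = ((real i - 1/2) * h) *\<^sub>R e1 + \<rho> *\<^sub>R w" unfolding q_def w_def by simp
    then show ?thesis by (simp add: inner_add_left inner_add_right orth ww we power2_eq_square)
  qed
  have inq: "q t \<in> circ h i" for t
  proof -
    have "q t \<bullet> q t - 2 * (real i * h) * (q t \<bullet> e1) + (real i * h)^2 = 1"
      unfolding qq q1 using \<rho>sq by (simp add: algebra_simps power2_eq_square)
    then show ?thesis unfolding circ_def d_hub using q1 by simp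
  qed
  have inj: "inj_on q {0..pi}"
  proof (rule inj_onI)
    fix s t assume st: "s \<in> {0..pi}" "t \<in> {0..pi}" "q s = q t"
    then have "\<rho> * cos s = \<rho> * cos t" using q2 by metis
    then have "cos s = cos t" using \<rho>pos by simp
    then show "s = t" using st cos_inj_pi by auto
  qed
  have "infinite {0..pi}" using pi_gt_zero by (simp add: infinite_Icc)
  then have "infinite (q ` {0..pi})" using inj finite_imageD by blast
  moreover have "q ` {0..pi} \<subseteq> circ h i" using inq by auto
  ultimately show ?thesis using finite_subset by blast
qed

lemma hub_e1: "hub h i \<bullet> e1 = real i * h" unfolding hub_def by (simp add: orth)

lemma nat_half: "real i = real i' - 1/2 \<Longrightarrow> False"
proof -
  assume a: "real i = real i' - 1/2"
  then have "real i < real i'" "real i' < real i + 1" by linarith+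
  then have "i < i'" "i' < i + 1" by linarith+
  then show False by simp
qed

lemma construct:
  fixes X Y :: "pt3 set"
  assumes l1: "l \<ge> 1" and fX: "finite X" and fY: "finite Y" and Ys: "Y \<subseteq> sphere 0 1"
    and cX: "card X \<le> m" and cY: "card Y \<le> m"
  shows "\<exists>P. finite P \<and> card P \<le> (l + 3) * m + (l + 1) \<and>
    card {(x, y). x \<in> X \<and> y \<in> Y \<and> dist x y = 1 \<and> x \<noteq> 0} * m ^ l \<le> unit_chains (2 * l + 1) P \<and>
    m ^ (l + 1) \<le> unit_chains (2 * l + 1) P"
proof -
  define F where "F = X \<union> Y"
  have fF: "finite F" unfolding F_def using fX fY by simp
  define B where "B = (\<lambda>(p, i). (p \<bullet> e1) / real i) ` (F \<times> {1..l})"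
  have fB: "finite B" unfolding B_def using fF by simp
  have "infinite {0<..<(1::real)}" by (simp add: infinite_Ioo)
  then have "infinite ({0<..<(1::real)} - B)" using fB by (simp add: Diff_infinite_finite)
  then obtain h where h: "h \<in> {0<..<(1::real)}" "h \<notin> B" using infinite_imp_nonempty by blast
  have h0: "0 < h" "h < 1" using h by auto
  have hubF: "hub h i \<notin> F" if i: "i \<in> {1..l}" for i
  proof
    assume hF: "hub h i \<in> F"
    have "(hub h i \<bullet> e1) / real i = h" using i hub_e1[of h i] by simp
    then have "h \<in> B" unfolding B_def using hF i by (intro image_eqI[of _ _ "(hub h i, i)"]) auto
    then show False using h by simp
  qed
  have "\<forall>i. \<exists>S. S \<subseteq> circ h i - F \<and> finite S \<and> card S = m"
  proof
    fix i
    have "infinite (circ h i - F)" using circ_infinite[OF h0] fF by (simp add: Diff_infinite_finite)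
    then show "\<exists>S. S \<subseteq> circ h i - F \<and> finite S \<and> card S = m"
      using infinite_arbitrarily_large by metis
  qed
  then obtain \<Gamma> where \<Gamma>: "\<And>i. \<Gamma> i \<subseteq> circ h i - F" "\<And>i. finite (\<Gamma> i)" "\<And>i. card (\<Gamma> i) = m"
    by metis
  interpret tl: tail "hub h" \<Gamma> m
  proof
    show "inj (hub h)"
    proof (rule injI)
      fix i j assume "hub h i = hub h j"
      then have "hub h i \<bullet> e1 = hub h j \<bullet> e1" by simp
      then show "i = j" using h0 by (simp add: hub_e1)
    qed
    show "hub h i \<notin> \<Gamma> i'" for i i'
    proof
      assume "hub h i \<in> \<Gamma> i'"
      then have "hub h i \<in> circ h i'" using \<Gamma>(1) by blast
      then have "real i * h = (real i' - 1/2) * h" unfolding circ_def by (simp add: hub_e1)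
      then have "real i = real i' - 1/2" using h0 by simp
      then show False by (rule nat_half)
    qed
    show "\<Gamma> i \<inter> \<Gamma> i' = {}" if "i \<noteq> i'" for i i'
    proof -
      have "circ h i \<inter> circ h i' = {}" unfolding circ_def using that h0 by auto
      then show ?thesis using \<Gamma>(1)[of i] \<Gamma>(1)[of i'] by blast
    qed
    show "finite (\<Gamma> i)" for i by (rule \<Gamma>(2))
    show "card (\<Gamma> i) = m" for i by (rule \<Gamma>(3))
    show "dist (hub h i) z = 1" if "z \<in> \<Gamma> (Suc i)" for i z
      using circ_prev \<Gamma>(1) that by blast
    show "dist z (hub h (Suc i)) = 1" if "z \<in> \<Gamma> (Suc i)" for i z
      using \<Gamma>(1)[of "Suc i"] that unfolding circ_def by blast
  qed
  have hub0: "hub h 0 = 0" unfolding hub_def by simp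
  define P where "P = X \<union> Y \<union> hub h ` {..l} \<union> (\<Union>i\<in>{..l}. \<Gamma> i)"
  have fP: "finite P" unfolding P_def using fX fY \<Gamma>(2) by simp
  have cP: "card P \<le> (l + 3) * m + (l + 1)"
  proof -
    have "card P \<le> card (X \<union> Y \<union> hub h ` {..l}) + card (\<Union>i\<in>{..l}. \<Gamma> i)"
      unfolding P_def by (rule card_Un_le)
    also have "card (X \<union> Y \<union> hub h ` {..l}) \<le> card (X \<union> Y) + card (hub h ` {..l})" by (rule card_Un_le)
    also have "card (X \<union> Y) \<le> card X + card Y" by (rule card_Un_le)
    also have "card (hub h ` {..l}) \<le> l + 1" using card_image_le[of "{..l}" "hub h"] by simp
    also have "card (\<Union>i\<in>{..l}. \<Gamma> i) \<le> (\<Sum>i\<in>{..l}. card (\<Gamma> i))" by (rule card_UN_le) simp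
    also have "(\<Sum>i\<in>{..l}. card (\<Gamma> i)) = (l + 1) * m" using \<Gamma>(3) by simp
    finally show ?thesis using cX cY by (simp add: algebra_simps)
  qed
  have t1: "card {(x, y). x \<in> X \<and> y \<in> Y \<and> dist x y = 1 \<and> x \<noteq> hub h 0} * m ^ l \<le> unit_chains (2 * l + 1) P"
  proof (rule tl.type1[OF l1 fP])
    show "X \<subseteq> P" "Y \<subseteq> P" unfolding P_def by auto
    show "hub h ` {..<l} \<subseteq> P" unfolding P_def by auto
    show "\<Gamma> i \<subseteq> P" if "i \<in> {1..l}" for i unfolding P_def using that by auto
    show "dist y (hub h 0) = 1" if "y \<in> Y" for y using that Ys hub0 by (auto simp: dist_norm)
    show "x \<notin> hub h ` {1..<l} \<and> (\<forall>i\<in>{1..l}. x \<notin> \<Gamma> i)" if "x \<in> X \<union> Y" for x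
    proof
      show "x \<notin> hub h ` {1..<l}" using hubF that unfolding F_def by fastforce
      show "\<forall>i\<in>{1..l}. x \<notin> \<Gamma> i" using \<Gamma>(1) that unfolding F_def by blast
    qed
  qed
  have t2: "m ^ (l + 1) \<le> unit_chains (2 * l + 1) P"
  proof (rule tl.type2[OF l1 fP])
    show "hub h ` {..l} \<subseteq> P" unfolding P_def by auto
    show "\<Gamma> i \<subseteq> P" if "i \<le> l" for i unfolding P_def using that by auto
    show "dist s (hub h 0) = 1" if "s \<in> \<Gamma> 0" for s using \<Gamma>(1)[of 0] that unfolding circ_def by blast
  qed
  show ?thesis using fP cP t1 t2 unfolding hub0 by blast
qed

lemma select_exact:
  fixes w :: "'a \<Rightarrow> real"
  shows "finite A \<Longrightarrow> m \<le> card A \<Longrightarrow> \<exists>B\<subseteq>A. card B = m \<and> real m * sum w A \<le> real (card A) * sum w B"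
proof (induction "card A" arbitrary: A rule: less_induct)
  case less
  show ?case
  proof (cases "m = 0")
    case True
    then show ?thesis by (intro exI[of _ "{}"]) auto
  next
    case m0: False
    show ?thesis
    proof (cases "card A = m")
      case True
      then show ?thesis by (intro exI[of _ A]) (auto simp: mult.commute)
    next
      case False
      define N where "N = card A"
      have Nm: "N > m" using False less.prems unfolding N_def by simp
      have ne: "A \<noteq> {}" using Nm N_def by auto
      define a where "a = arg_min_on w A"
      have aA: "a \<in> A" unfolding a_def using arg_min_if_finite(1)[OF less.prems(1) ne] .
      have amin: "\<And>b. b \<in> A \<Longrightarrow> w a \<le> w b"
        using arg_min_if_finite(2)[OF less.prems(1) ne] unfolding a_def by (meson not_less)
      define A' where "A' = A - {a}"
      have fA': "finite A'" unfolding A'_def using less.prems by simp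
      have cA': "card A' = N - 1" unfolding A'_def N_def using aA less.prems by simp
      have lt: "card A' < card A" using cA' Nm N_def by simp
      have mA': "m \<le> card A'" using cA' Nm by simp
      obtain B where B: "B \<subseteq> A'" "card B = m" "real m * sum w A' \<le> real (card A') * sum w B"
        using less.hyps[OF lt fA' mA'] by blast
      have sA: "sum w A = sum w A' + w a" unfolding A'_def using aA less.prems
        by (simp add: sum.remove)
      have sA': "sum w A' \<ge> real (N - 1) * w a"
      proof -
        have "sum w A' \<ge> sum (\<lambda>_. w a) A'" by (rule sum_mono) (use amin A'_def in auto)
        then show ?thesis using cA' by simp
      qed
      have N1: "real (N - 1) = real N - 1" using Nm by simp
      have key1: "real N * sum w A' \<ge> (real N - 1) * sum w A"
        using sA sA' N1 by (simp add: algebra_simps)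
      have key2: "real m * ((real N - 1) * sum w A) \<le> real m * (real N * sum w A')"
        by (rule mult_left_mono[OF key1]) simp
      have key3: "real N * (real m * sum w A') \<le> real N * ((real N - 1) * sum w B)"
        by (rule mult_left_mono) (use B(3) cA' N1 in auto)
      have "(real N - 1) * (real m * sum w A) \<le> (real N - 1) * (real N * sum w B)"
        using key2 key3 by (simp add: algebra_simps)
      moreover have "real N - 1 > 0" using Nm m0 by simp
      ultimately have "real m * sum w A \<le> real N * sum w B" by simp
      then show ?thesis using B A'_def N_def by (intro exI[of _ B]) auto
    qed
  qed
qed

lemma select:
  fixes w :: "'a \<Rightarrow> real"
  assumes "finite A" "card A \<le> n" "m \<le> n" "\<And>a. a \<in> A \<Longrightarrow> w a \<ge> 0"
  shows "\<exists>B\<subseteq>A. card B \<le> m \<and> real m * sum w A \<le> real n * sum w B"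
proof (cases "card A \<le> m")
  case True
  have "sum w A \<ge> 0" using assms(4) by (simp add: sum_nonneg)
  then have "real m * sum w A \<le> real n * sum w A" using assms(3) by (simp add: mult_right_mono)
  then show ?thesis using True by (intro exI[of _ A]) auto
next
  case False
  obtain B where B: "B \<subseteq> A" "card B = m" "real m * sum w A \<le> real (card A) * sum w B"
    using select_exact[OF assms(1), of m w] False by auto
  have "sum w B \<ge> 0" using assms(4) B(1) by (simp add: subset_iff sum_nonneg)
  then have "real (card A) * sum w B \<le> real n * sum w B" using assms(2) by (simp add: mult_right_mono)
  then show ?thesis using B by (intro exI[of _ B]) auto
qed

definition inc :: "pt3 set \<Rightarrow> pt3 set \<Rightarrow> (pt3 \<times> pt3) set" where
  "inc X Y = {(x, y). x \<in> X \<and> y \<in> Y \<and> dist x y = 1}"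

lemma bip_inc: "bip_unit_pairs X Y = card (inc X Y)" unfolding bip_unit_pairs_def inc_def by simp

lemma inc_sum_x: "finite X \<Longrightarrow> finite Y \<Longrightarrow> card (inc X Y) = (\<Sum>x\<in>X. card {y \<in> Y. dist x y = 1})"
proof -
  assume f: "finite X" "finite Y"
  have "inc X Y = Sigma X (\<lambda>x. {y \<in> Y. dist x y = 1})" unfolding inc_def by auto
  then show ?thesis using f by (simp add: card_SigmaI)
qed

lemma inc_sum_y: "finite X \<Longrightarrow> finite Y \<Longrightarrow> card (inc X Y) = (\<Sum>y\<in>Y. card {x \<in> X. dist x y = 1})"
proof -
  assume f: "finite X" "finite Y"
  have "inc X Y = (\<lambda>(y, x). (x, y)) ` Sigma Y (\<lambda>y. {x \<in> X. dist x y = 1})" unfolding inc_def by auto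
  moreover have "inj_on (\<lambda>(y, x). (x, y)) (Sigma Y (\<lambda>y. {x \<in> X. dist x y = 1}))" by (auto simp: inj_on_def)
  ultimately have "card (inc X Y) = card (Sigma Y (\<lambda>y. {x \<in> X. dist x y = 1}))" by (simp add: card_image)
  then show ?thesis using f by (simp add: card_SigmaI)
qed

lemma reduce:
  assumes fX: "finite X" and fY: "finite Y" and cX: "card X \<le> n" and cY: "card Y \<le> n" and mn: "m \<le> n"
  shows "\<exists>X'\<subseteq>X. \<exists>Y'\<subseteq>Y. card X' \<le> m \<and> card Y' \<le> m \<and>
    real m ^ 2 * card (inc X Y) \<le> real n ^ 2 * card (inc X' Y')"
proof -
  obtain X' where X': "X' \<subseteq> X" "card X' \<le> m"
    "real m * (\<Sum>x\<in>X. real (card {y \<in> Y. dist x y = 1})) \<le> real n * (\<Sum>x\<in>X'. real (card {y \<in> Y. dist x y = 1}))"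
    using select[OF fX cX mn, of "\<lambda>x. real (card {y \<in> Y. dist x y = 1})"] by auto
  have fX': "finite X'" using X'(1) fX finite_subset by blast
  have e1: "real m * card (inc X Y) \<le> real n * card (inc X' Y)"
    using X'(3) inc_sum_x[OF fX fY] inc_sum_x[OF fX' fY] by simp
  obtain Y' where Y': "Y' \<subseteq> Y" "card Y' \<le> m"
    "real m * (\<Sum>y\<in>Y. real (card {x \<in> X'. dist x y = 1})) \<le> real n * (\<Sum>y\<in>Y'. real (card {x \<in> X'. dist x y = 1}))"
    using select[OF fY cY mn, of "\<lambda>y. real (card {x \<in> X'. dist x y = 1})"] by auto
  have fY': "finite Y'" using Y'(1) fY finite_subset by blast
  have e2: "real m * card (inc X' Y) \<le> real n * card (inc X' Y')"
    using Y'(3) inc_sum_y[OF fX' fY] inc_sum_y[OF fX' fY'] by simp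
  have "real m ^ 2 * card (inc X Y) = real m * (real m * card (inc X Y))" by (simp add: power2_eq_square)
  also have "\<dots> \<le> real m * (real n * card (inc X' Y))" by (rule mult_left_mono[OF e1]) simp
  also have "\<dots> = real n * (real m * card (inc X' Y))" by simp
  also have "\<dots> \<le> real n * (real n * card (inc X' Y'))" by (rule mult_left_mono[OF e2]) simp
  also have "\<dots> = real n ^ 2 * card (inc X' Y')" by (simp add: power2_eq_square)
  finally show ?thesis using X' Y' by blast
qed

lemma finite_inc: "finite X \<Longrightarrow> finite Y \<Longrightarrow> finite (inc X Y)"
  by (rule finite_subset[of _ "X \<times> Y"]) (auto simp: inc_def)

lemma fiber_bound:
  assumes fA: "finite A" and fib: "\<And>z. z \<in> F ` A \<Longrightarrow> card {a \<in> A. F a = z} \<le> K"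
  shows "card A \<le> K * card (F ` A)"
proof -
  have "A = (\<Union>z\<in>F ` A. {a \<in> A. F a = z})" by auto
  then have "card A \<le> (\<Sum>z\<in>F ` A. card {a \<in> A. F a = z})"
    using card_UN_le[of "F ` A" "\<lambda>z. {a \<in> A. F a = z}"] fA by simp
  also have "\<dots> \<le> (\<Sum>z\<in>F ` A. K)" by (rule sum_mono) (use fib in auto)
  finally show ?thesis by (simp add: mult.commute)
qed

lemma transfer:
  assumes fX: "finite X" and fY: "finite Y" and A: "A \<subseteq> inc X Y"
    and pres: "\<And>x y. (x, y) \<in> A \<Longrightarrow> dist (f x) (g y) = 1"
    and fib: "\<And>x1 y1 x2 y2. (x1, y1) \<in> A \<Longrightarrow> card {(x2, y2) \<in> A. f x2 = f x1 \<and> g y2 = g y1} \<le> K"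
  shows "card A \<le> K * card (inc (f ` X) (g ` Y))"
proof -
  define F where "F = (\<lambda>(x, y). (f x, g y))"
  have fA: "finite A" using A fX fY finite_subset[of A "X \<times> Y"] unfolding inc_def by auto
  have "card A \<le> K * card (F ` A)"
  proof (rule fiber_bound[OF fA])
    fix z assume "z \<in> F ` A"
    then obtain x1 y1 where z: "(x1, y1) \<in> A" "z = (f x1, g y1)" unfolding F_def by auto
    have "{a \<in> A. F a = z} = {(x2, y2) \<in> A. f x2 = f x1 \<and> g y2 = g y1}" unfolding F_def z by auto
    then show "card {a \<in> A. F a = z} \<le> K" using fib[OF z(1)] by simp
  qed
  also have "card (F ` A) \<le> card (inc (f ` X) (g ` Y))"
  proof (rule card_mono)
    show "finite (inc (f ` X) (g ` Y))" using fX fY by (simp add: finite_inc)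
    show "F ` A \<subseteq> inc (f ` X) (g ` Y)" unfolding F_def inc_def using A pres unfolding inc_def by auto
  qed
  finally show ?thesis by simp
qed

lemma line_sphere:
  fixes p w y :: pt3
  assumes w: "w \<noteq> 0"
  shows "finite {x. \<exists>t. x = p + t *\<^sub>R w \<and> dist x y = 1} \<and> card {x. \<exists>t. x = p + t *\<^sub>R w \<and> dist x y = 1} \<le> 2"
proof -
  define a where "a = w \<bullet> w"
  define b where "b = 2 * (w \<bullet> (p - y))"
  define c where "c = (p - y) \<bullet> (p - y) - 1"
  have a0: "a \<noteq> 0" unfolding a_def using w by simp
  define r1 where "r1 = (- b + sqrt (discrim a b c)) / (2 * a)"
  define r2 where "r2 = (- b - sqrt (discrim a b c)) / (2 * a)"
  have sub: "{x. \<exists>t. x = p + t *\<^sub>R w \<and> dist x y = 1} \<subseteq> (\<lambda>t. p + t *\<^sub>R w) ` {r1, r2}"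
  proof
    fix x assume "x \<in> {x. \<exists>t. x = p + t *\<^sub>R w \<and> dist x y = 1}"
    then obtain t where t: "x = p + t *\<^sub>R w" "dist x y = 1" by auto
    have "(x - y) \<bullet> (x - y) = 1" using t(2) unfolding dist_norm by (simp add: norm_eq_1)
    moreover have "x - y = (p - y) + t *\<^sub>R w" using t(1) by simp
    ultimately have "(p - y) \<bullet> (p - y) + 2 * t * (w \<bullet> (p - y)) + t * t * (w \<bullet> w) = 1"
      by (simp add: inner_add_left inner_add_right inner_commute algebra_simps)
    then have "a * t\<^sup>2 + b * t + c = 0" unfolding a_def b_def c_def by (simp add: power2_eq_square algebra_simps)
    then have "t = r1 \<or> t = r2" using discriminant_iff[OF a0] unfolding r1_def r2_def by blast
    then show "x \<in> (\<lambda>t. p + t *\<^sub>R w) ` {r1, r2}" using t(1) by auto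
  qed
  have "card ((\<lambda>t. p + t *\<^sub>R w) ` {r1, r2}) \<le> 2"
    using card_image_le[of "{r1, r2}" "\<lambda>t. p + t *\<^sub>R w"] card_insert_le_m1[of 1 "{r2}" r1] by (auto simp: card_insert_if)
  then show ?thesis using sub card_mono[OF _ sub] finite_subset[OF sub] by fastforce
qed

lemma vec3_zero: "(w::pt3) = 0 \<longleftrightarrow> w \<bullet> e1 = 0 \<and> w \<bullet> e2 = 0 \<and> w \<bullet> e3 = 0"
  unfolding e1_def e2_def e3_def inner_axis by (simp add: vec_eq_iff forall_3)

lemma exists_dir:
  assumes fW: "finite W" and W0: "0 \<notin> W"
  shows "\<exists>e::pt3. e \<bullet> e = 1 \<and> (\<forall>w\<in>W. e \<bullet> w \<noteq> 0)"
proof -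
  define pw where "pw w = [: w \<bullet> e1, w \<bullet> e2, w \<bullet> e3 :]" for w
  have pw0: "pw w \<noteq> 0" if "w \<in> W" for w
  proof
    assume "pw w = 0"
    then have "w \<bullet> e1 = 0 \<and> w \<bullet> e2 = 0 \<and> w \<bullet> e3 = 0" unfolding pw_def by (auto simp: pCons_eq_0_iff)
    then have "w = 0" using vec3_zero by blast
    then show False using that W0 by simp
  qed
  define R where "R = (\<Union>w\<in>W. {t. poly (pw w) t = 0})"
  have fR: "finite R" unfolding R_def using fW pw0 poly_roots_finite by blast
  obtain t where t: "t \<notin> R" using fR infinite_UNIV_char_0 ex_new_if_finite by blast
  define p where "p = e1 + t *\<^sub>R e2 + (t * t) *\<^sub>R e3"
  have pw_eq: "p \<bullet> w = poly (pw w) t" for w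
    unfolding p_def pw_def by (simp add: inner_add_left inner_commute algebra_simps)
  have pe1: "p \<bullet> e1 = 1" unfolding p_def by (simp add: inner_add_left orth)
  then have p0: "p \<noteq> 0" by auto
  define e where "e = (1 / norm p) *\<^sub>R p"
  have "e \<bullet> e = 1" unfolding e_def using p0 by (simp add: dot_square_norm power2_eq_square)
  moreover have "e \<bullet> w \<noteq> 0" if "w \<in> W" for w
  proof -
    have "p \<bullet> w \<noteq> 0" using t that unfolding R_def pw_eq by auto
    then show ?thesis unfolding e_def using p0 by simp
  qed
  ultimately show ?thesis by blast
qed

lemma sphere_inner: "y \<in> sphere c r \<Longrightarrow> (y - c) \<bullet> (y - c) = r^2"
  by (simp add: dist_norm norm_minus_commute dot_square_norm)

lemma dist1_uv: "dist x y = 1 \<Longrightarrow> ((x - c) - (y - c)) \<bullet> ((x - c) - (y - c)) = 1"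
  by (simp add: dist_norm norm_eq_1)

lemma key_uv:
  fixes u v :: pt3
  assumes "(u - v) \<bullet> (u - v) = 1" "v \<bullet> v = r^2"
  shows "2 * (u \<bullet> v) = u \<bullet> u + r^2 - 1"
proof -
  have "(u - v) \<bullet> (u - v) = u \<bullet> u - 2 * (u \<bullet> v) + v \<bullet> v"
    by (simp add: inner_diff_left inner_diff_right inner_commute)
  then show ?thesis using assms by simp
qed

lemma norm_r1:
  assumes fX: "finite X" and fY: "finite Y" and Ys: "Y \<subseteq> sphere c 1"
  shows "card (inc X Y) \<le> card (inc ((\<lambda>x. x - c) ` X) ((\<lambda>y. y - c) ` Y)) \<and> (\<lambda>y. y - c) ` Y \<subseteq> sphere 0 1"
proof
  have "card (inc X Y) \<le> 1 * card (inc ((\<lambda>x. x - c) ` X) ((\<lambda>y. y - c) ` Y))"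
  proof (rule transfer[OF fX fY subset_refl])
    show "dist (x - c) (y - c) = 1" if "(x, y) \<in> inc X Y" for x y
      using that unfolding inc_def by (simp add: dist_norm)
    show "card {(x2, y2) \<in> inc X Y. x2 - c = x1 - c \<and> y2 - c = y1 - c} \<le> 1" if "(x1, y1) \<in> inc X Y" for x1 y1
    proof -
      have "{(x2, y2) \<in> inc X Y. x2 - c = x1 - c \<and> y2 - c = y1 - c} \<subseteq> {(x1, y1)}" by auto
      then show ?thesis using card_mono[of "{(x1, y1)}"] by fastforce
    qed
  qed
  then show "card (inc X Y) \<le> card (inc ((\<lambda>x. x - c) ` X) ((\<lambda>y. y - c) ` Y))" by simp
  show "(\<lambda>y. y - c) ` Y \<subseteq> sphere 0 1" using Ys by (auto simp: dist_norm norm_minus_commute)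
qed

definition f1 :: "pt3 \<Rightarrow> real \<Rightarrow> pt3 \<Rightarrow> pt3" where
  "f1 c r x = (((x - c) \<bullet> (x - c) + r^2 - 1) / (r * ((x - c) \<bullet> (x - c)))) *\<^sub>R (x - c)"

definition g1 :: "pt3 \<Rightarrow> real \<Rightarrow> pt3 \<Rightarrow> pt3" where
  "g1 c r y = (1 / r) *\<^sub>R (y - c)"

lemma norm_A1:
  assumes fX: "finite X" and fY: "finite Y" and Ys: "Y \<subseteq> sphere c r" and r0: "r > 0" and r1: "r \<noteq> 1"
  shows "card {(x, y) \<in> inc X Y. (x - c) \<bullet> (x - c) + r^2 - 1 \<noteq> 0} \<le> 2 * card (inc (f1 c r ` X) (g1 c r ` Y))
     \<and> g1 c r ` Y \<subseteq> sphere 0 1"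
proof
  define A where "A = {(x, y) \<in> inc X Y. (x - c) \<bullet> (x - c) + r^2 - 1 \<noteq> 0}"
  have basic: "(x - c) \<bullet> (x - c) \<noteq> 0 \<and> 2 * ((x - c) \<bullet> (y - c)) = (x - c) \<bullet> (x - c) + r^2 - 1 \<and> (y - c) \<bullet> (y - c) = r^2"
    if "(x, y) \<in> inc X Y" for x y
  proof -
    have y: "y \<in> Y" "dist x y = 1" using that unfolding inc_def by auto
    have vv: "(y - c) \<bullet> (y - c) = r^2" using Ys y(1) sphere_inner by blast
    have uv: "((x - c) - (y - c)) \<bullet> ((x - c) - (y - c)) = 1" using dist1_uv[OF y(2)] .
    have k: "2 * ((x - c) \<bullet> (y - c)) = (x - c) \<bullet> (x - c) + r^2 - 1" using key_uv[OF uv vv] .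
    have "(x - c) \<bullet> (x - c) \<noteq> 0"
    proof
      assume "(x - c) \<bullet> (x - c) = 0"
      then have "x - c = 0" by simp
      moreover have "(c - y) \<bullet> (c - y) = (y - c) \<bullet> (y - c)"
        by (simp add: inner_diff_left inner_diff_right inner_commute)
      ultimately have "r^2 = 1" using uv vv by simp
      then show False using r0 r1 by (simp add: power2_eq_1_iff)
    qed
    then show ?thesis using k vv by simp
  qed
  have "card A \<le> 2 * card (inc (f1 c r ` X) (g1 c r ` Y))"
  proof (rule transfer[OF fX fY])
    show "A \<subseteq> inc X Y" unfolding A_def by auto
    show "dist (f1 c r x) (g1 c r y) = 1" if "(x, y) \<in> A" for x y
    proof -
      define u where "u = x - c"
      define v where "v = y - c"
      define q where "q = u \<bullet> u"
      define T where "T = q + r^2 - 1"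
      have b: "q \<noteq> 0" "2 * (u \<bullet> v) = T" "v \<bullet> v = r^2"
        using basic[of x y] that unfolding A_def u_def v_def q_def T_def by auto
      define lam where "lam = T / (r * q)"
      have fg: "f1 c r x - g1 c r y = lam *\<^sub>R u - (1 / r) *\<^sub>R v"
        unfolding f1_def g1_def lam_def T_def q_def u_def v_def by simp
      have "(lam *\<^sub>R u - (1 / r) *\<^sub>R v) \<bullet> (lam *\<^sub>R u - (1 / r) *\<^sub>R v)
          = lam^2 * q - 2 * (lam / r) * (u \<bullet> v) + (v \<bullet> v) / r^2"
        unfolding q_def by (simp add: inner_diff_left inner_diff_right inner_commute power2_eq_square algebra_simps)
      also have "\<dots> = lam^2 * q - (lam / r) * T + 1"
        using b r0 by (simp add: algebra_simps)
      also have "lam^2 * q - (lam / r) * T = 0"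
        unfolding lam_def using b(1) r0 by (simp add: power2_eq_square field_simps)
      finally show ?thesis unfolding fg dist_norm by (simp add: norm_eq_1)
    qed
    show "card {(x2, y2) \<in> A. f1 c r x2 = f1 c r x1 \<and> g1 c r y2 = g1 c r y1} \<le> 2" if x1: "(x1, y1) \<in> A" for x1 y1
    proof -
      define x' where "x' = f1 c r x1"
      define S where "S = {x. \<exists>t. x = c + t *\<^sub>R x' \<and> dist x y1 = 1}"
      have coef: "((x - c) \<bullet> (x - c) + r^2 - 1) / (r * ((x - c) \<bullet> (x - c))) \<noteq> 0" if "(x, y) \<in> A" for x y
        using basic[of x y] that r0 unfolding A_def by auto
      have x'0: "x' \<noteq> 0"
      proof -
        have "x1 - c \<noteq> 0" using basic[of x1 y1] x1 unfolding A_def by auto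
        then show ?thesis unfolding x'_def f1_def using coef[OF x1] by simp
      qed
      have sub: "{(x2, y2) \<in> A. f1 c r x2 = f1 c r x1 \<and> g1 c r y2 = g1 c r y1} \<subseteq> (\<lambda>x. (x, y1)) ` S"
      proof
        fix z assume z: "z \<in> {(x2, y2) \<in> A. f1 c r x2 = f1 c r x1 \<and> g1 c r y2 = g1 c r y1}"
        then obtain x2 y2 where z2: "z = (x2, y2)" "(x2, y2) \<in> A" "f1 c r x2 = x'" "g1 c r y2 = g1 c r y1"
          unfolding x'_def by auto
        have "y2 = y1" using z2(4) r0 unfolding g1_def by simp
        define \<mu> where "\<mu> = ((x2 - c) \<bullet> (x2 - c) + r^2 - 1) / (r * ((x2 - c) \<bullet> (x2 - c)))"
        have \<mu>0: "\<mu> \<noteq> 0" unfolding \<mu>_def using coef[OF z2(2)] .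
        have "\<mu> *\<^sub>R (x2 - c) = x'" using z2(3) unfolding f1_def \<mu>_def by simp
        then have "(1 / \<mu>) *\<^sub>R (\<mu> *\<^sub>R (x2 - c)) = (1 / \<mu>) *\<^sub>R x'" by simp
        then have xe: "x2 - c = (1 / \<mu>) *\<^sub>R x'" using \<mu>0 by simp
        have "x2 = c + (x2 - c)" by simp
        then have "x2 = c + (1 / \<mu>) *\<^sub>R x'" unfolding xe .
        moreover have "dist x2 y1 = 1" using z2(2) \<open>y2 = y1\<close> unfolding A_def inc_def by auto
        ultimately have "x2 \<in> S" unfolding S_def by blast
        then show "z \<in> (\<lambda>x. (x, y1)) ` S" using z2(1) \<open>y2 = y1\<close> by auto
      qed
      have S2: "finite S \<and> card S \<le> 2" unfolding S_def using line_sphere[OF x'0] by blast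
      have "card ((\<lambda>x. (x, y1)) ` S) \<le> 2" using card_image_le[of S "\<lambda>x. (x, y1)"] S2 by simp
      then show ?thesis using card_mono[OF _ sub] S2 by (meson finite_imageI order_trans)
    qed
  qed
  then show "card {(x, y) \<in> inc X Y. (x - c) \<bullet> (x - c) + r^2 - 1 \<noteq> 0} \<le> 2 * card (inc (f1 c r ` X) (g1 c r ` Y))"
    unfolding A_def .
  show "g1 c r ` Y \<subseteq> sphere 0 1"
  proof
    fix z assume "z \<in> g1 c r ` Y"
    then obtain y where y: "y \<in> Y" "z = g1 c r y" by auto
    have "norm (y - c) = r" using Ys y(1) by (auto simp: dist_norm norm_minus_commute)
    then show "z \<in> sphere 0 1" using y(2) r0 unfolding g1_def by simp
  qed
qed

definition F0 :: "pt3 \<Rightarrow> pt3 \<Rightarrow> pt3" where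
  "F0 e u = (-2 * (e \<bullet> u) / (u \<bullet> u)) *\<^sub>R (u - (2 * (e \<bullet> u)) *\<^sub>R e)"

definition G0 :: "pt3 \<Rightarrow> pt3 \<Rightarrow> pt3" where
  "G0 e v = (1 / (v \<bullet> v)) *\<^sub>R ((2 * (e \<bullet> v)) *\<^sub>R v + (v \<bullet> v - 4 * (e \<bullet> v)^2) *\<^sub>R e)"

lemma W_inner:
  assumes ee: "e \<bullet> e = 1"
  shows "((2 * s) *\<^sub>R v + (V - 4 * s^2) *\<^sub>R e) \<bullet> ((2 * s) *\<^sub>R v + (V - 4 * s^2) *\<^sub>R e)
    = 4 * s^2 * (v \<bullet> v) + 4 * s * (V - 4 * s^2) * (e \<bullet> v) + (V - 4 * s^2)^2"
  using ee by (simp add: inner_add_left inner_add_right inner_commute power2_eq_square algebra_simps)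

lemma G0_unit:
  assumes ee: "e \<bullet> e = 1" and v: "v \<noteq> 0"
  shows "G0 e v \<bullet> G0 e v = 1"
proof -
  define s where "s = e \<bullet> v"
  define V where "V = v \<bullet> v"
  have V0: "V \<noteq> 0" unfolding V_def using v by simp
  have "((2 * s) *\<^sub>R v + (V - 4 * s^2) *\<^sub>R e) \<bullet> ((2 * s) *\<^sub>R v + (V - 4 * s^2) *\<^sub>R e) = V^2"
    unfolding W_inner[OF ee] unfolding s_def V_def by (simp add: power2_eq_square algebra_simps)
  then show ?thesis unfolding G0_def s_def[symmetric] V_def[symmetric] using V0
    by (simp add: power2_eq_square)
qed

lemma F0_G0_dist:
  assumes ee: "e \<bullet> e = 1" and u: "u \<noteq> 0" and v: "v \<noteq> 0" and uv: "u \<bullet> v = 0"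
  shows "(F0 e u - G0 e v) \<bullet> (F0 e u - G0 e v) = 1"
proof -
  define g where "g = e \<bullet> u"
  define q where "q = u \<bullet> u"
  define s where "s = e \<bullet> v"
  define V where "V = v \<bullet> v"
  define a where "a = -2 * g / q"
  define P where "P = u - (2 * g) *\<^sub>R e"
  define W where "W = (2 * s) *\<^sub>R v + (V - 4 * s^2) *\<^sub>R e"
  have q0: "q \<noteq> 0" unfolding q_def using u by simp
  have V0: "V \<noteq> 0" unfolding V_def using v by simp
  have F: "F0 e u = a *\<^sub>R P" unfolding F0_def a_def P_def g_def q_def by simp
  have G: "G0 e v = (1 / V) *\<^sub>R W" unfolding G0_def W_def s_def V_def by simp
  have PP: "P \<bullet> P = q" unfolding P_def q_def g_def using ee
    by (simp add: inner_diff_left inner_diff_right inner_commute power2_eq_square algebra_simps)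
  have PW: "P \<bullet> W = - g * V" unfolding P_def W_def g_def V_def s_def using ee uv
    by (simp add: inner_diff_left inner_add_right inner_commute power2_eq_square algebra_simps)
  have GG: "G0 e v \<bullet> G0 e v = 1" by (rule G0_unit[OF ee v])
  have FF: "F0 e u \<bullet> F0 e u = 4 * g^2 / q" unfolding F PP[symmetric] using PP q0
    by (simp add: a_def power2_eq_square field_simps)
  have FG: "F0 e u \<bullet> G0 e v = 2 * g^2 / q" unfolding F G using PW V0 q0
    by (simp add: a_def power2_eq_square field_simps)
  have "(F0 e u - G0 e v) \<bullet> (F0 e u - G0 e v) = F0 e u \<bullet> F0 e u - 2 * (F0 e u \<bullet> G0 e v) + G0 e v \<bullet> G0 e v"
    by (simp add: inner_diff_left inner_diff_right inner_commute)
  then show ?thesis using FF FG GG by simp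
qed

lemma G0_inj:
  assumes ee: "e \<bullet> e = 1" and VV: "v1 \<bullet> v1 = v2 \<bullet> v2" and v1: "v1 \<noteq> 0"
    and s1: "e \<bullet> v1 \<noteq> 0" and s2: "e \<bullet> v2 \<noteq> 0" and eq: "G0 e v1 = G0 e v2"
  shows "v2 = v1 \<or> v2 = - v1"
proof -
  define V where "V = v1 \<bullet> v1"
  have V0: "V \<noteq> 0" unfolding V_def using v1 by simp
  have eG: "e \<bullet> G0 e v = (V - 2 * (e \<bullet> v)^2) / V" if vV: "v \<bullet> v = V" for v
  proof -
    have eW: "e \<bullet> ((2 * (e \<bullet> v)) *\<^sub>R v + (V - 4 * (e \<bullet> v)^2) *\<^sub>R e) = V - 2 * (e \<bullet> v)^2"
      using ee by (simp add: inner_add_right power2_eq_square)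
    have "G0 e v = (1 / V) *\<^sub>R ((2 * (e \<bullet> v)) *\<^sub>R v + (V - 4 * (e \<bullet> v)^2) *\<^sub>R e)"
      unfolding G0_def vV ..
    then have "e \<bullet> G0 e v = (1 / V) * (e \<bullet> ((2 * (e \<bullet> v)) *\<^sub>R v + (V - 4 * (e \<bullet> v)^2) *\<^sub>R e))"
      by (simp only: inner_scaleR_right)
    then show ?thesis unfolding eW by simp
  qed
  have A1: "e \<bullet> G0 e v1 = (V - 2 * (e \<bullet> v1)^2) / V" by (rule eG) (simp add: V_def)
  have A2: "e \<bullet> G0 e v2 = (V - 2 * (e \<bullet> v2)^2) / V" by (rule eG) (simp add: V_def VV)
  have "(V - 2 * (e \<bullet> v1)^2) / V = (V - 2 * (e \<bullet> v2)^2) / V" using A1 A2 eq by metis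
  then have sq: "(e \<bullet> v1)^2 = (e \<bullet> v2)^2" using V0 by (simp add: field_simps)
  have "V *\<^sub>R G0 e v1 = V *\<^sub>R G0 e v2" using eq by simp
  then have "(2 * (e \<bullet> v1)) *\<^sub>R v1 + (V - 4 * (e \<bullet> v1)^2) *\<^sub>R e = (2 * (e \<bullet> v2)) *\<^sub>R v2 + (V - 4 * (e \<bullet> v2)^2) *\<^sub>R e"
    unfolding G0_def using V0 VV V_def by simp
  then have "(2 * (e \<bullet> v1)) *\<^sub>R v1 = (2 * (e \<bullet> v2)) *\<^sub>R v2" using sq by simp
  then have "(1/2) *\<^sub>R ((2 * (e \<bullet> v1)) *\<^sub>R v1) = (1/2) *\<^sub>R ((2 * (e \<bullet> v2)) *\<^sub>R v2)" by simp
  then have lin: "(e \<bullet> v1) *\<^sub>R v1 = (e \<bullet> v2) *\<^sub>R v2" by simp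
  from sq have "e \<bullet> v2 = e \<bullet> v1 \<or> e \<bullet> v2 = - (e \<bullet> v1)" by (auto simp: power2_eq_iff)
  then show ?thesis
  proof
    assume h: "e \<bullet> v2 = e \<bullet> v1"
    then have "(e \<bullet> v1) *\<^sub>R v1 = (e \<bullet> v1) *\<^sub>R v2" using lin by simp
    then show ?thesis using s1 by simp
  next
    assume h: "e \<bullet> v2 = - (e \<bullet> v1)"
    then have "(e \<bullet> v1) *\<^sub>R v1 = (e \<bullet> v1) *\<^sub>R (- v2)" using lin by simp
    then have "v1 = - v2" using s1 by (metis scaleR_cancel_left)
    then show ?thesis by simp
  qed
qed

lemma F0_inj:
  assumes ee: "e \<bullet> e = 1" and qq: "u1 \<bullet> u1 = u2 \<bullet> u2" and u1: "u1 \<noteq> 0"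
    and g1: "e \<bullet> u1 \<noteq> 0" and g2: "e \<bullet> u2 \<noteq> 0" and eq: "F0 e u1 = F0 e u2"
  shows "u2 = u1 \<or> u2 = - u1"
proof -
  define q where "q = u1 \<bullet> u1"
  have q0: "q \<noteq> 0" unfolding q_def using u1 by simp
  have Fexp: "F0 e u = (-2 * (e \<bullet> u) / q) *\<^sub>R u + (4 * (e \<bullet> u)^2 / q) *\<^sub>R e" if "u \<bullet> u = q" for u
    unfolding F0_def using that by (simp add: scaleR_diff_right power2_eq_square algebra_simps)
  have eF: "e \<bullet> F0 e u = 2 * (e \<bullet> u)^2 / q" if "u \<bullet> u = q" for u
    unfolding Fexp[OF that] using ee q0 by (simp add: inner_add_right inner_diff_right power2_eq_square field_simps)
  have A1: "e \<bullet> F0 e u1 = 2 * (e \<bullet> u1)^2 / q" by (rule eF) (simp add: q_def)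
  have A2: "e \<bullet> F0 e u2 = 2 * (e \<bullet> u2)^2 / q" by (rule eF) (simp add: q_def qq)
  have "2 * (e \<bullet> u1)^2 / q = 2 * (e \<bullet> u2)^2 / q" using A1 A2 eq by metis
  then have sq: "(e \<bullet> u1)^2 = (e \<bullet> u2)^2" using q0 by (simp add: field_simps)
  have B1: "F0 e u1 = (-2 * (e \<bullet> u1) / q) *\<^sub>R u1 + (4 * (e \<bullet> u1)^2 / q) *\<^sub>R e" by (rule Fexp) (simp add: q_def)
  have B2: "F0 e u2 = (-2 * (e \<bullet> u2) / q) *\<^sub>R u2 + (4 * (e \<bullet> u2)^2 / q) *\<^sub>R e" by (rule Fexp) (simp add: q_def qq)
  have "(-2 * (e \<bullet> u1) / q) *\<^sub>R u1 + (4 * (e \<bullet> u1)^2 / q) *\<^sub>R e = (-2 * (e \<bullet> u2) / q) *\<^sub>R u2 + (4 * (e \<bullet> u2)^2 / q) *\<^sub>R e"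
    using B1 B2 eq by metis
  then have "(-2 * (e \<bullet> u1) / q) *\<^sub>R u1 = (-2 * (e \<bullet> u2) / q) *\<^sub>R u2" using sq by simp
  then have "q *\<^sub>R ((-2 * (e \<bullet> u1) / q) *\<^sub>R u1) = q *\<^sub>R ((-2 * (e \<bullet> u2) / q) *\<^sub>R u2)" by simp
  then have "(2 * (e \<bullet> u1)) *\<^sub>R u1 = (2 * (e \<bullet> u2)) *\<^sub>R u2" using q0 by simp
  then have "(1/2) *\<^sub>R ((2 * (e \<bullet> u1)) *\<^sub>R u1) = (1/2) *\<^sub>R ((2 * (e \<bullet> u2)) *\<^sub>R u2)" by simp
  then have lin: "(e \<bullet> u1) *\<^sub>R u1 = (e \<bullet> u2) *\<^sub>R u2" by simp
  from sq have "e \<bullet> u2 = e \<bullet> u1 \<or> e \<bullet> u2 = - (e \<bullet> u1)" by (auto simp: power2_eq_iff)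
  then show ?thesis
  proof
    assume h: "e \<bullet> u2 = e \<bullet> u1"
    then have "(e \<bullet> u1) *\<^sub>R u1 = (e \<bullet> u1) *\<^sub>R u2" using lin by simp
    then show ?thesis using g1 by simp
  next
    assume h: "e \<bullet> u2 = - (e \<bullet> u1)"
    then have "(e \<bullet> u1) *\<^sub>R u1 = (e \<bullet> u1) *\<^sub>R (- u2)" using lin by simp
    then have "u1 = - u2" using g1 by (metis scaleR_cancel_left)
    then show ?thesis by simp
  qed
qed

lemma card_le2: "card {a, b} \<le> 2" by (simp add: card_insert_if)

lemma norm_A0:
  assumes fX: "finite X" and fY: "finite Y" and Ys: "Y \<subseteq> sphere c r" and r0: "r > 0" and r1: "r \<noteq> 1"
    and ee: "e \<bullet> e = 1" and eX: "\<And>x. x \<in> X \<Longrightarrow> x \<noteq> c \<Longrightarrow> e \<bullet> (x - c) \<noteq> 0"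
    and eY: "\<And>y. y \<in> Y \<Longrightarrow> e \<bullet> (y - c) \<noteq> 0"
  shows "card {(x, y) \<in> inc X Y. (x - c) \<bullet> (x - c) + r^2 - 1 = 0}
      \<le> 4 * card (inc ((\<lambda>x. F0 e (x - c)) ` X) ((\<lambda>y. G0 e (y - c)) ` Y))
     \<and> (\<lambda>y. G0 e (y - c)) ` Y \<subseteq> sphere 0 1"
proof
  define A where "A = {(x, y) \<in> inc X Y. (x - c) \<bullet> (x - c) + r^2 - 1 = 0}"
  have vfacts: "y - c \<noteq> 0 \<and> (y - c) \<bullet> (y - c) = r^2" if "y \<in> Y" for y
  proof -
    have vv: "(y - c) \<bullet> (y - c) = r^2" using Ys that sphere_inner by blast
    moreover have "y - c \<noteq> 0"
    proof
      assume "y - c = 0"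
      then have "r^2 = 0" using vv by simp
      then show False using r0 by simp
    qed
    ultimately show ?thesis by simp
  qed
  have basic: "x - c \<noteq> 0 \<and> y - c \<noteq> 0 \<and> (x - c) \<bullet> (y - c) = 0 \<and> (y - c) \<bullet> (y - c) = r^2
      \<and> (x - c) \<bullet> (x - c) = 1 - r^2 \<and> x \<in> X \<and> y \<in> Y"
    if "(x, y) \<in> A" for x y
  proof -
    have y: "x \<in> X" "y \<in> Y" "dist x y = 1" "(x - c) \<bullet> (x - c) + r^2 - 1 = 0"
      using that unfolding A_def inc_def by auto
    have vv: "(y - c) \<bullet> (y - c) = r^2" "y - c \<noteq> 0" using vfacts y(2) by auto
    have uv: "((x - c) - (y - c)) \<bullet> ((x - c) - (y - c)) = 1" using dist1_uv[OF y(3)] .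
    have k: "2 * ((x - c) \<bullet> (y - c)) = (x - c) \<bullet> (x - c) + r^2 - 1" using key_uv[OF uv vv(1)] .
    have "x - c \<noteq> 0"
    proof
      assume "x - c = 0"
      then have "r^2 = 1" using y(4) by simp
      then show False using r0 r1 by (simp add: power2_eq_1_iff)
    qed
    then show ?thesis using k vv y by simp
  qed
  have "card A \<le> 4 * card (inc ((\<lambda>x. F0 e (x - c)) ` X) ((\<lambda>y. G0 e (y - c)) ` Y))"
  proof (rule transfer[OF fX fY])
    show "A \<subseteq> inc X Y" unfolding A_def by auto
    show "dist (F0 e (x - c)) (G0 e (y - c)) = 1" if "(x, y) \<in> A" for x y
    proof -
      have b: "x - c \<noteq> 0" "y - c \<noteq> 0" "(x - c) \<bullet> (y - c) = 0" using basic[OF that] by auto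
      show ?thesis using F0_G0_dist[OF ee b] unfolding dist_norm by (simp add: norm_eq_1)
    qed
    show "card {(x2, y2) \<in> A. F0 e (x2 - c) = F0 e (x1 - c) \<and> G0 e (y2 - c) = G0 e (y1 - c)} \<le> 4"
      if x1: "(x1, y1) \<in> A" for x1 y1
    proof -
      have b1: "x1 - c \<noteq> 0" "y1 - c \<noteq> 0" "(y1 - c) \<bullet> (y1 - c) = r^2" "(x1 - c) \<bullet> (x1 - c) = 1 - r^2"
        "x1 \<in> X" "y1 \<in> Y"
        using basic[OF x1] by auto
      have sub: "{(x2, y2) \<in> A. F0 e (x2 - c) = F0 e (x1 - c) \<and> G0 e (y2 - c) = G0 e (y1 - c)}
          \<subseteq> {x1, 2 *\<^sub>R c - x1} \<times> {y1, 2 *\<^sub>R c - y1}"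
      proof
        fix z assume "z \<in> {(x2, y2) \<in> A. F0 e (x2 - c) = F0 e (x1 - c) \<and> G0 e (y2 - c) = G0 e (y1 - c)}"
        then obtain x2 y2 where z: "z = (x2, y2)" "(x2, y2) \<in> A" "F0 e (x2 - c) = F0 e (x1 - c)"
          "G0 e (y2 - c) = G0 e (y1 - c)" by auto
        have b2: "x2 - c \<noteq> 0" "y2 - c \<noteq> 0" "(y2 - c) \<bullet> (y2 - c) = r^2" "(x2 - c) \<bullet> (x2 - c) = 1 - r^2"
          "x2 \<in> X" "y2 \<in> Y"
          using basic[OF z(2)] by auto
        have "y2 - c = y1 - c \<or> y2 - c = - (y1 - c)"
        proof (rule G0_inj[OF ee])
          show "(y1 - c) \<bullet> (y1 - c) = (y2 - c) \<bullet> (y2 - c)" using b1 b2 by simp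
          show "y1 - c \<noteq> 0" by (rule b1(2))
          show "e \<bullet> (y1 - c) \<noteq> 0" using eY b1(6) by blast
          show "e \<bullet> (y2 - c) \<noteq> 0" using eY b2(6) by blast
          show "G0 e (y1 - c) = G0 e (y2 - c)" using z(4) by simp
        qed
        then have yy: "y2 \<in> {y1, 2 *\<^sub>R c - y1}" by (auto simp: algebra_simps scaleR_2)
        have "x2 - c = x1 - c \<or> x2 - c = - (x1 - c)"
        proof (rule F0_inj[OF ee])
          show "(x1 - c) \<bullet> (x1 - c) = (x2 - c) \<bullet> (x2 - c)" using b1 b2 by simp
          show "x1 - c \<noteq> 0" by (rule b1(1))
          show "e \<bullet> (x1 - c) \<noteq> 0" using eX b1(5) b1(1) by simp
          show "e \<bullet> (x2 - c) \<noteq> 0" using eX b2(5) b2(1) by simp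
          show "F0 e (x1 - c) = F0 e (x2 - c)" using z(3) by simp
        qed
        then have xx: "x2 \<in> {x1, 2 *\<^sub>R c - x1}" by (auto simp: algebra_simps scaleR_2)
        show "z \<in> {x1, 2 *\<^sub>R c - x1} \<times> {y1, 2 *\<^sub>R c - y1}" using z(1) xx yy by blast
      qed
      have "card ({x1, 2 *\<^sub>R c - x1} \<times> {y1, 2 *\<^sub>R c - y1}) \<le> 2 * 2"
        unfolding card_cartesian_product by (rule mult_le_mono) (rule card_le2)+
      then show ?thesis using card_mono[OF _ sub] by fastforce
    qed
  qed
  then show "card {(x, y) \<in> inc X Y. (x - c) \<bullet> (x - c) + r^2 - 1 = 0}
      \<le> 4 * card (inc ((\<lambda>x. F0 e (x - c)) ` X) ((\<lambda>y. G0 e (y - c)) ` Y))" unfolding A_def .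
  show "(\<lambda>y. G0 e (y - c)) ` Y \<subseteq> sphere 0 1"
  proof
    fix z assume "z \<in> (\<lambda>y. G0 e (y - c)) ` Y"
    then obtain y where y: "y \<in> Y" "z = G0 e (y - c)" by auto
    have "G0 e (y - c) \<bullet> G0 e (y - c) = 1" using G0_unit[OF ee] vfacts[OF y(1)] by blast
    then show "z \<in> sphere 0 1" using y(2) by (simp add: norm_eq_1)
  qed
qed

lemma normalize:
  assumes fX: "finite X" and fY: "finite Y" and Ys: "Y \<subseteq> sphere c r" and r0: "r > 0"
  shows "\<exists>X' Y'. finite X' \<and> finite Y' \<and> card X' \<le> card X \<and> card Y' \<le> card Y \<and> Y' \<subseteq> sphere 0 1
     \<and> card (inc X Y) \<le> 8 * card (inc X' Y')"
proof (cases "r = 1")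
  case True
  define X' where "X' = (\<lambda>x. x - c) ` X"
  define Y' where "Y' = (\<lambda>y. y - c) ` Y"
  have h: "card (inc X Y) \<le> card (inc X' Y')" "Y' \<subseteq> sphere 0 1"
    using norm_r1[OF fX fY] Ys True unfolding X'_def Y'_def by auto
  have "finite X'" "finite Y'" "card X' \<le> card X" "card Y' \<le> card Y"
    unfolding X'_def Y'_def using fX fY by (auto simp: card_image_le)
  then show ?thesis using h by fastforce
next
  case r1: False
  define A0 where "A0 = {(x, y) \<in> inc X Y. (x - c) \<bullet> (x - c) + r^2 - 1 = 0}"
  define A1 where "A1 = {(x, y) \<in> inc X Y. (x - c) \<bullet> (x - c) + r^2 - 1 \<noteq> 0}"
  have split: "card (inc X Y) = card A0 + card A1"
  proof -
    have "inc X Y = A0 \<union> A1" "A0 \<inter> A1 = {}" unfolding A0_def A1_def by auto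
    moreover have "A0 \<subseteq> inc X Y" "A1 \<subseteq> inc X Y" unfolding A0_def A1_def by auto
    then have "finite A0" "finite A1" using finite_subset finite_inc[OF fX fY] by blast+
    ultimately show ?thesis by (simp add: card_Un_disjoint)
  qed
  show ?thesis
  proof (cases "card A0 \<le> card A1")
    case True
    have h: "card A1 \<le> 2 * card (inc (f1 c r ` X) (g1 c r ` Y))" "g1 c r ` Y \<subseteq> sphere 0 1"
      using norm_A1[OF fX fY Ys r0 r1] unfolding A1_def by auto
    have "card (inc X Y) \<le> 8 * card (inc (f1 c r ` X) (g1 c r ` Y))" using split True h(1) by linarith
    moreover have "finite (f1 c r ` X)" "finite (g1 c r ` Y)" "card (f1 c r ` X) \<le> card X" "card (g1 c r ` Y) \<le> card Y"
      using fX fY by (auto simp: card_image_le)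
    ultimately show ?thesis using h(2) by blast
  next
    case False
    define W where "W = (\<lambda>x. x - c) ` (X - {c}) \<union> (\<lambda>y. y - c) ` Y"
    have fW: "finite W" unfolding W_def using fX fY by simp
    have W0: "0 \<notin> W"
    proof
      assume "0 \<in> W"
      then obtain y where "y \<in> Y" "y = c" unfolding W_def by auto
      then have "r = 0" using Ys by auto
      then show False using r0 by simp
    qed
    obtain e where ee: "e \<bullet> e = 1" and eW: "\<forall>w\<in>W. e \<bullet> w \<noteq> 0" using exists_dir[OF fW W0] by blast
    have eX: "e \<bullet> (x - c) \<noteq> 0" if "x \<in> X" "x \<noteq> c" for x using eW that unfolding W_def by auto
    have eY: "e \<bullet> (y - c) \<noteq> 0" if "y \<in> Y" for y using eW that unfolding W_def by auto
    have h: "card A0 \<le> 4 * card (inc ((\<lambda>x. F0 e (x - c)) ` X) ((\<lambda>y. G0 e (y - c)) ` Y))"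
      "(\<lambda>y. G0 e (y - c)) ` Y \<subseteq> sphere 0 1"
      using norm_A0[OF fX fY Ys r0 r1 ee eX eY] unfolding A0_def by auto
    have "card (inc X Y) \<le> 8 * card (inc ((\<lambda>x. F0 e (x - c)) ` X) ((\<lambda>y. G0 e (y - c)) ` Y))"
      using split False h(1) by linarith
    moreover have "finite ((\<lambda>x. F0 e (x - c)) ` X)" "finite ((\<lambda>y. G0 e (y - c)) ` Y)"
      "card ((\<lambda>x. F0 e (x - c)) ` X) \<le> card X" "card ((\<lambda>y. G0 e (y - c)) ` Y) \<le> card Y"
      using fX fY by (auto simp: card_image_le)
    ultimately show ?thesis using h(2) by blast
  qed
qed

lemma inc0_bound:
  assumes "finite X" "finite Y"
  shows "card (inc X Y) \<le> card {(x, y). x \<in> X \<and> y \<in> Y \<and> dist x y = 1 \<and> x \<noteq> 0} + card Y"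
proof -
  have "inc X Y \<subseteq> {(x, y). x \<in> X \<and> y \<in> Y \<and> dist x y = 1 \<and> x \<noteq> 0} \<union> ({0} \<times> Y)"
    unfolding inc_def by auto
  then have "card (inc X Y) \<le> card ({(x, y). x \<in> X \<and> y \<in> Y \<and> dist x y = 1 \<and> x \<noteq> 0} \<union> ({0} \<times> Y))"
    by (rule card_mono[rotated]) (use assms in \<open>auto intro: finite_subset[of _ "X \<times> Y"]\<close>)
  also have "\<dots> \<le> card {(x, y). x \<in> X \<and> y \<in> Y \<and> dist x y = 1 \<and> x \<noteq> 0} + card ({0::pt3} \<times> Y)"
    by (rule card_Un_le)
  finally show ?thesis by (simp only: card_cartesian_product_singleton)
qed

lemma div_bounds:
  fixes n q l :: nat
  assumes q: "q = l + 4" and n: "n \<ge> 2 * q * (l + 1)"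
  shows "(l + 3) * (n div q) + (l + 1) \<le> n" and "real (n div q) \<ge> real n / (2 * q)" and "n div q \<ge> 1"
proof -
  have q0: "q > 0" using q by simp
  have nq: "n div q \<ge> l + 1"
  proof -
    have "q * (l + 1) \<le> n" using n by (simp add: algebra_simps)
    then show ?thesis using q0 by (simp add: less_eq_div_iff_mult_less_eq mult.commute)
  qed
  have qd: "q * (n div q) \<le> n" by simp
  show "(l + 3) * (n div q) + (l + 1) \<le> n" using nq qd q by (simp add: algebra_simps)
  show "n div q \<ge> 1" using nq by simp
  have m1: "n mod q < q" using q0 by simp
  have m2: "q * (n div q) + n mod q = n" by (rule mult_div_mod_eq)
  have "n < q * (n div q) + q" using m1 m2 by linarith
  then have "real n < real (q * (n div q) + q)" by (simp only: of_nat_less_iff)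
  then have "real n < real q * (real (n div q) + 1)" by (simp add: algebra_simps)
  then have a: "real n / real q < real (n div q) + 1" using q0 by (simp add: divide_less_eq mult.commute)
  have "2 * q \<le> n" using n mult_le_mono2[of 1 "l + 1" "2 * q"] by simp
  then have "real (2 * q) \<le> real n" by (simp only: of_nat_le_iff)
  then have "real n \<ge> 2 * real q" by simp
  then have b: "real n / real q \<ge> 2" using q0 by (simp add: le_divide_eq)
  have "real n / (2 * real q) = (real n / real q) / 2" by simp
  then show "real (n div q) \<ge> real n / (2 * q)" using a b by simp
qed

lemma partB_main:
  fixes l n :: nat
  assumes l1: "l \<ge> 1" and n: "n \<ge> 2 * (l + 4) * (l + 1)"
  shows "real (C3 (2 * l + 1) n) \<ge> (1 / (16 * (2 * real (l + 4)) ^ (l + 2))) * (real (us3 n) * real n ^ l)"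
proof (cases "us3 n = 0")
  case True
  then show ?thesis by simp
next
  case False
  define q where "q = l + 4"
  define m where "m = n div q"
  have q0: "q > 0" unfolding q_def by simp
  have db: "(l + 3) * m + (l + 1) \<le> n" "real m \<ge> real n / (2 * q)" "m \<ge> 1"
    using div_bounds[OF q_def, of n] n unfolding m_def q_def by auto
  have "m \<le> (l + 3) * m" by simp
  then have mn: "m \<le> n" using db(1) by linarith
  obtain X Y c r where XY: "finite X" "card X = n" "finite Y" "card Y = n" "r > 0" "Y \<subseteq> sphere c r"
    "bip_unit_pairs X Y = us3 n"
    using us3_attained[of n] False by blast
  obtain X' Y' where N: "finite X'" "finite Y'" "card X' \<le> n" "card Y' \<le> n" "Y' \<subseteq> sphere 0 1"
    "card (inc X Y) \<le> 8 * card (inc X' Y')"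
    using normalize[OF XY(1) XY(3) XY(6) XY(5)] XY(2) XY(4) by fastforce
  obtain X'' Y'' where R: "X'' \<subseteq> X'" "Y'' \<subseteq> Y'" "card X'' \<le> m" "card Y'' \<le> m"
    "real m ^ 2 * card (inc X' Y') \<le> real n ^ 2 * card (inc X'' Y'')"
    using reduce[OF N(1) N(2) N(3) N(4) mn] by blast
  have fX'': "finite X''" using R(1) N(1) finite_subset by blast
  have fY'': "finite Y''" using R(2) N(2) finite_subset by blast
  have Ys'': "Y'' \<subseteq> sphere 0 1" using R(2) N(5) by blast
  obtain P where P: "finite P" "card P \<le> (l + 3) * m + (l + 1)"
    "card {(x, y). x \<in> X'' \<and> y \<in> Y'' \<and> dist x y = 1 \<and> x \<noteq> 0} * m ^ l \<le> unit_chains (2 * l + 1) P"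
    "m ^ (l + 1) \<le> unit_chains (2 * l + 1) P"
    using construct[OF l1 fX'' fY'' Ys'' R(3) R(4)] by blast
  have CP: "unit_chains (2 * l + 1) P \<le> C3 (2 * l + 1) n" using C3_ge[OF P(1)] P(2) db(1) by simp
  define C where "C = real (C3 (2 * l + 1) n)"
  define I where "I = real (us3 n)"
  define K where "K = real (card (inc X' Y'))"
  define J where "J = real (card (inc X'' Y''))"
  define mr where "mr = real m"
  define nr where "nr = real n"
  have mpos: "mr > 0" unfolding mr_def using db(3) by simp
  have npos: "nr > 0" unfolding nr_def using n by simp
  have IK: "I \<le> 8 * K" unfolding I_def K_def using N(6) XY(7) bip_inc[of X Y] by simp
  have KJ: "mr ^ 2 * K \<le> nr ^ 2 * J" unfolding mr_def nr_def K_def J_def using R(5) by simp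
  have J0: "J - mr \<le> real (card {(x, y). x \<in> X'' \<and> y \<in> Y'' \<and> dist x y = 1 \<and> x \<noteq> 0})"
    using inc0_bound[OF fX'' fY''] R(4) unfolding J_def mr_def by linarith
  have C1: "(J - mr) * mr ^ l \<le> C"
  proof -
    have "(J - mr) * mr ^ l \<le> real (card {(x, y). x \<in> X'' \<and> y \<in> Y'' \<and> dist x y = 1 \<and> x \<noteq> 0}) * mr ^ l"
      by (rule mult_right_mono[OF J0]) (use mpos in simp)
    also have "\<dots> \<le> C"
    proof -
      have "card {(x, y). x \<in> X'' \<and> y \<in> Y'' \<and> dist x y = 1 \<and> x \<noteq> 0} * m ^ l \<le> C3 (2 * l + 1) n"
        using P(3) CP by linarith
      then have "real (card {(x, y). x \<in> X'' \<and> y \<in> Y'' \<and> dist x y = 1 \<and> x \<noteq> 0} * m ^ l) \<le> real (C3 (2 * l + 1) n)"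
        by (simp only: of_nat_le_iff)
      then show ?thesis unfolding C_def mr_def by simp
    qed
    finally show ?thesis .
  qed
  have "m ^ (l + 1) \<le> C3 (2 * l + 1) n" using P(4) CP by linarith
  then have "real (m ^ (l + 1)) \<le> real (C3 (2 * l + 1) n)" by (simp only: of_nat_le_iff)
  then have C2: "mr ^ (l + 1) \<le> C" unfolding C_def mr_def by simp
  have "J * mr ^ l = (J - mr) * mr ^ l + mr ^ (l + 1)" by (simp add: algebra_simps)
  then have C3: "J * mr ^ l \<le> 2 * C" using C1 C2 by linarith
  have JI: "mr ^ 2 * I \<le> 8 * (nr ^ 2 * J)"
  proof -
    have "mr ^ 2 * I \<le> mr ^ 2 * (8 * K)" by (rule mult_left_mono[OF IK]) simp
    also have "\<dots> = 8 * (mr ^ 2 * K)" by simp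
    also have "\<dots> \<le> 8 * (nr ^ 2 * J)" using KJ by simp
    finally show ?thesis .
  qed
  have "mr ^ (l + 2) * I = mr ^ l * (mr ^ 2 * I)" by (simp add: power_add power2_eq_square)
  also have "\<dots> \<le> mr ^ l * (8 * (nr ^ 2 * J))" by (rule mult_left_mono[OF JI]) (use mpos in simp)
  also have "\<dots> = 8 * nr ^ 2 * (J * mr ^ l)" by (simp add: algebra_simps)
  also have "\<dots> \<le> 8 * nr ^ 2 * (2 * C)" by (rule mult_left_mono[OF C3]) simp
  finally have main: "mr ^ (l + 2) * I \<le> 16 * nr ^ 2 * C" by simp
  have mr2: "mr \<ge> nr / (2 * real q)" unfolding mr_def nr_def using db(2) by simp
  have "(nr / (2 * real q)) ^ (l + 2) * I \<le> mr ^ (l + 2) * I"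
    by (rule mult_right_mono[OF power_mono[OF mr2]]) (use npos q0 I_def in auto)
  also note main
  finally have ineq: "(nr / (2 * real q)) ^ (l + 2) * I \<le> 16 * nr ^ 2 * C" .
  define Z where "Z = nr ^ l / (2 * real q) ^ (l + 2)"
  have E: "(nr / (2 * real q)) ^ (l + 2) = nr ^ 2 * Z"
    unfolding Z_def by (simp add: power_divide power_add power2_eq_square algebra_simps)
  have "(nr ^ 2 * Z) * I \<le> 16 * nr ^ 2 * C" using ineq unfolding E .
  then have "nr ^ 2 * (Z * I) \<le> nr ^ 2 * (16 * C)" by (simp only: mult_ac)
  then have "Z * I \<le> 16 * C" using npos by simp
  then have "(nr ^ l / (2 * real q) ^ (l + 2)) * I \<le> 16 * C" unfolding Z_def .
  then have "(1 / (16 * (2 * real q) ^ (l + 2))) * (I * nr ^ l) \<le> C" using q0 by (simp add: field_simps)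
  then show ?thesis unfolding C_def I_def nr_def q_def by simp
qed

lemma partB:
  assumes "odd k" "k \<ge> 3"
  shows "\<exists>c>0. \<exists>N. \<forall>n\<ge>N. real (C3 k n) \<ge> c * (real (us3 n) * real n ^ ((k - 1) div 2))"
proof -
  define l where "l = (k - 1) div 2"
  have kl: "k = 2 * l + 1" unfolding l_def using assms(1) by presburger
  have l1: "l \<ge> 1" using assms(2) kl by simp
  show ?thesis
    using partB_main[OF l1] unfolding kl[symmetric] l_def[symmetric]
    by (intro exI[of _ "1 / (16 * (2 * real (l + 4)) ^ (l + 2))"] conjI) (auto intro!: exI[of _ "2 * (l + 4) * (l + 1)"])
qed

theorem proposition1p6:
  fixes k :: nat
  assumes "odd k" and "k \<ge> 3"
  shows "(\<lambda>n. real (C3 k n)) \<in>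
    \<Omega>(\<lambda>n. max (real (u3 n) ^ k / real n ^ (k - 1))
                (real (us3 n) * real n ^ ((k - 1) div 2)))"
proof -
  obtain c1 N1 where c1: "c1 > 0" and h1: "\<And>n. n \<ge> N1 \<Longrightarrow> real (C3 k n) \<ge> c1 * (real (u3 n) ^ k / real n ^ (k - 1))"
    using partA[of k] assms(2) by fastforce
  obtain c2 N2 where c2: "c2 > 0" and h2: "\<And>n. n \<ge> N2 \<Longrightarrow> real (C3 k n) \<ge> c2 * (real (us3 n) * real n ^ ((k - 1) div 2))"
    using partB[OF assms] by blast
  show ?thesis
  proof (rule landau_omega.bigI[of "min c1 c2"])
    show "min c1 c2 > 0" using c1 c2 by simp
    show "\<forall>\<^sub>F n in at_top. norm (real (C3 k n)) \<ge> min c1 c2 * norm (max (real (u3 n) ^ k / real n ^ (k - 1))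
                (real (us3 n) * real n ^ ((k - 1) div 2)))"
      unfolding eventually_at_top_linorder
    proof (intro exI allI impI)
      fix n assume "n \<ge> max N1 N2"
      hence a: "real (C3 k n) \<ge> c1 * (real (u3 n) ^ k / real n ^ (k - 1))"
        and b: "real (C3 k n) \<ge> c2 * (real (us3 n) * real n ^ ((k - 1) div 2))"
        using h1 h2 by auto
      have nn1: "real (u3 n) ^ k / real n ^ (k - 1) \<ge> 0" by simp
      have nn2: "real (us3 n) * real n ^ ((k - 1) div 2) \<ge> 0" by simp
      have "min c1 c2 * (real (u3 n) ^ k / real n ^ (k - 1)) \<le> c1 * (real (u3 n) ^ k / real n ^ (k - 1))"
        by (rule mult_right_mono[OF _ nn1]) simp
      moreover have "min c1 c2 * (real (us3 n) * real n ^ ((k - 1) div 2)) \<le> c2 * (real (us3 n) * real n ^ ((k - 1) div 2))"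
        by (rule mult_right_mono[OF _ nn2]) simp
      ultimately show "norm (real (C3 k n)) \<ge> min c1 c2 * norm (max (real (u3 n) ^ k / real n ^ (k - 1))
                (real (us3 n) * real n ^ ((k - 1) div 2)))"
        using a b nn1 nn2 by (auto simp: max_def)
    qed
  qed
qed
end
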